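(* In the Call-by-Value probabilistic $\lambda$-calculus (as defined in the context), for each multi-distribution $\mathbf m$: 1. $[\![\mathbf m]\!]$ is defined, i.e. $\mathrm{Lim}_{\mathrm{obs}_{\mathrm{Nnf}}}(\mathbf m,\Rightarrow)$ has a greatest element; 2. for every subdistribution $\mathbf r$: $\mathbf m\Rrightarrow_E^{\mathrm{obs}_{\mathrm{Nnf}}}\mathbf r$ if and only if $\mathbf r=[\![\mathbf m]\!]$. Hence $\Rrightarrow_E$ is an $\mathrm{obs}_{\mathrm{Nnf}}$-normalizing strategy for $\Rightarrow$.
   Context: Terms $\Lambda_\oplus$: $M::=x\mid\lambda x.M\mid MM\mid M\oplus M$; values $V::=x\mid\lambda x.M$. Contexts $C::=[\,]\mid MC\mid CM\mid\lambda x.C\mid C\oplus M\mid M\oplus C$; weak contexts $W::=[\,]\mid WM\mid MW$. A multi-distribution is a finite multiset $[p_iM_i]_{i\in I}$ with $p_i\in(0,1]$, $\sum_ip_i\le1$; $+$ is multiset union, $q\cdot[p_iM_i]_i=[(qp_i)M_i]_i$, $[M]:=[1M]$. $C[(\lambda x.M)V]\to_{\beta_v}[C[M\{V/x\}]]$; $W[M\oplus N]\to_\oplus[\tfrac12W[M],\tfrac12W[N]]$; $\to:=\to_{\beta_v}\cup\to_\oplus$; surface reduction $\to_s$ is $\to_\oplus$ together with the closure of $\beta_v$ under weak contexts. $M$ is $\to$-normal (surface-normal) if no $\mathbf m$ with $M\to\mathbf m$ ($M\to_s\mathbf m$); $\mathrm{Nnf}$ is the set of $\to$-normal terms. Lifting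 $\Rightarrow_r$ of $r$: least relation with $[M]\Rightarrow_r[M]$; $[M]\Rightarrow_r\mathbf m$ if $M\,r\,\mathbf m$; $[p_iM_i]_{i\in I}\Rightarrow_r\sum_ip_i\cdot\mathbf m_i$ if $[M_i]\Rightarrow_r\mathbf m_i$ for all $i$. Full lifting $\Rrightarrow_r$: same, but $[M]\Rrightarrow_r[M]$ only when $M$ is $\to$-normal. $\Rightarrow$ is the lifting of $\to$. Let $\rightsquigarrow_U$ be the unbiased iteration of weak $\beta_v$-reduction on $\Lambda_\oplus$: if $M\to_wM'$ (closure of $\beta_v$ under weak contexts) then $M\rightsquigarrow_UM'$; if $M$ is $\to_w$-normal: $\lambda x.P\rightsquigarrow_U\lambda x.P'$, $PQ\rightsquigarrow_UP'Q$, $PQ\rightsquigarrow_UPQ'$, $P\oplus Q\rightsquigarrow_UP'\oplus Q$, $P\oplus Q\rightsquigarrow_UP\oplus Q'$ whenever $P\rightsquigarrow_UP'$, resp. $Q\rightsquigarrow_UQ'$. $\rightsquigarrow_E$: if $M$ is not surface-normal and $M\to_s\mathbf m$ then $M\rightsquigarrow_E\mathbf m$; if $M$ is surface-normal and $M\rightsquigarrow_UM'$ then $M\rightsquigarrow_E[M']$; $\Rrightarrow_E$ is its full lifting. $\mathrm{obs}_{\mathrm{Nnf}}([p_iM_i]_{i\in I})$ is the subdistribution $\mu$ on $\mathrm{Nnf}$ with $\mu(N)=\sum_{i:\,M_i=N}p_i$, ordered pointwise. For $R$ a relation on multi-distributions, $\mathbf m\,R^{\mathrm{obs}_{\mathrm{Nnf}}}\,\mathbf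 r$ means there is a maximal $R$-sequence $(\mathbf m_n)_n$ from $\mathbf m$ (infinite, or finite ending in an $R$-normal element and then continued constantly) with $\sup_n\mathrm{obs}_{\mathrm{Nnf}}(\mathbf m_n)=\mathbf r$; $\mathrm{Lim}_{\mathrm{obs}_{\mathrm{Nnf}}}(\mathbf m,R)$ is the set of such $\mathbf r$; $[\![\mathbf m]\!]$ is the greatest element of $\mathrm{Lim}_{\mathrm{obs}_{\mathrm{Nnf}}}(\mathbf m,\Rightarrow)$. A subrelation $R'\subseteq R$ is $\mathrm{obs}_{\mathrm{Nnf}}$-normalizing for $R$ if it is asymptotically complete ($\mathbf m R^{\mathrm{obs}}\mathbf q$ implies $\mathbf m R'^{\mathrm{obs}}\mathbf p$ for some $\mathbf p\ge\mathbf q$) and asymptotically uniform (every element of $\mathrm{Lim}(\mathbf m,R')$ is maximal in $\mathrm{Lim}(\mathbf m,R')$), for all $\mathbf m$. *)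

theory Defs
  imports Complex_Main "HOL-Library.Multiset"
begin

datatype trm = Var nat | Lam trm | App trm trm | Choice trm trm

fun is_val :: "trm \<Rightarrow> bool" where
  "is_val (Var _) = True"
| "is_val (Lam _) = True"
| "is_val _ = False"

primrec lift :: "nat \<Rightarrow> trm \<Rightarrow> trm" where
  "lift k (Var i) = (if i < k then Var i else Var (Suc i))"
| "lift k (Lam t) = Lam (lift (Suc k) t)"
| "lift k (App t u) = App (lift k t) (lift k u)"
| "lift k (Choice t u) = Choice (lift k t) (lift k u)"

primrec subst :: "trm \<Rightarrow> nat \<Rightarrow> trm \<Rightarrow> trm" where
  "subst (Var i) k s = (if i < k then Var i else if i = k then s else Var (i - 1))"
| "subst (Lam t) k s = Lam (subst t (Suc k) (lift 0 s))"
| "subst (App t u) k s = App (subst t k s) (subst u k s)"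
| "subst (Choice t u) k s = Choice (subst t k s) (subst u k s)"

inductive beta :: "trm \<Rightarrow> trm \<Rightarrow> bool" where
  beta_root: "is_val V \<Longrightarrow> beta (App (Lam M) V) (subst M 0 V)"
| beta_appL: "beta M M' \<Longrightarrow> beta (App M N) (App M' N)"
| beta_appR: "beta N N' \<Longrightarrow> beta (App M N) (App M N')"
| beta_lam: "beta M M' \<Longrightarrow> beta (Lam M) (Lam M')"
| beta_choiceL: "beta M M' \<Longrightarrow> beta (Choice M N) (Choice M' N)"
| beta_choiceR: "beta N N' \<Longrightarrow> beta (Choice M N) (Choice M N')"

inductive beta_w :: "trm \<Rightarrow> trm \<Rightarrow> bool" where
  betaw_root: "is_val V \<Longrightarrow> beta_w (App (Lam M) V) (subst M 0 V)"
| betaw_appL: "beta_w M M' \<Longrightarrow> beta_w (App M N) (App M' N)"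
| betaw_appR: "beta_w N N' \<Longrightarrow> beta_w (App M N) (App M N')"

text \<open>choice_split T A B: T = W[P (+) Q], A = W[P], B = W[Q] for a weak context W\<close>
inductive choice_split :: "trm \<Rightarrow> trm \<Rightarrow> trm \<Rightarrow> bool" where
  cs_root: "choice_split (Choice M N) M N"
| cs_appL: "choice_split M A B \<Longrightarrow> choice_split (App M N) (App A N) (App B N)"
| cs_appR: "choice_split N A B \<Longrightarrow> choice_split (App M N) (App M A) (App M B)"

type_synonym mdist = "(real \<times> trm) multiset"

definition is_mdist :: "mdist \<Rightarrow> bool" where
  "is_mdist m \<longleftrightarrow> (\<forall>(p, M)\<in>#m. 0 < p \<and> p \<le> 1) \<and> sum_mset (image_mset fst m) \<le> 1"

definition scale :: "real \<Rightarrow> mdist \<Rightarrow> mdist" where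
  "scale q m = image_mset (\<lambda>(p, M). (q * p, M)) m"

definition oplus_step :: "trm \<Rightarrow> mdist \<Rightarrow> bool" where
  "oplus_step M m \<longleftrightarrow> (\<exists>A B. choice_split M A B \<and> m = {#(1/2, A), (1/2, B)#})"

definition red :: "trm \<Rightarrow> mdist \<Rightarrow> bool" where
  "red M m \<longleftrightarrow> (\<exists>N. beta M N \<and> m = {#(1, N)#}) \<or> oplus_step M m"

definition sred :: "trm \<Rightarrow> mdist \<Rightarrow> bool" where
  "sred M m \<longleftrightarrow> (\<exists>N. beta_w M N \<and> m = {#(1, N)#}) \<or> oplus_step M m"

definition normal :: "trm \<Rightarrow> bool" where
  "normal M \<longleftrightarrow> \<not> (\<exists>m. red M m)"

definition snormal :: "trm \<Rightarrow> bool" where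
  "snormal M \<longleftrightarrow> \<not> (\<exists>m. sred M m)"

definition wnormal :: "trm \<Rightarrow> bool" where
  "wnormal M \<longleftrightarrow> \<not> (\<exists>N. beta_w M N)"

inductive ured :: "trm \<Rightarrow> trm \<Rightarrow> bool" where
  ured_w: "beta_w M M' \<Longrightarrow> ured M M'"
| ured_lam: "wnormal (Lam P) \<Longrightarrow> ured P P' \<Longrightarrow> ured (Lam P) (Lam P')"
| ured_appL: "wnormal (App P Q) \<Longrightarrow> ured P P' \<Longrightarrow> ured (App P Q) (App P' Q)"
| ured_appR: "wnormal (App P Q) \<Longrightarrow> ured Q Q' \<Longrightarrow> ured (App P Q) (App P Q')"
| ured_choiceL: "wnormal (Choice P Q) \<Longrightarrow> ured P P' \<Longrightarrow> ured (Choice P Q) (Choice P' Q)"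
| ured_choiceR: "wnormal (Choice P Q) \<Longrightarrow> ured Q Q' \<Longrightarrow> ured (Choice P Q) (Choice P Q')"

inductive ered :: "trm \<Rightarrow> mdist \<Rightarrow> bool" where
  ered_s: "\<not> snormal M \<Longrightarrow> sred M m \<Longrightarrow> ered M m"
| ered_u: "snormal M \<Longrightarrow> ured M M' \<Longrightarrow> ered M {#(1, M')#}"

text \<open>lifting ok r: reflexive step [M] => [M] allowed when ok M
  (ok = True: lifting; ok = normal: full lifting). A multi-distribution
  [p_i M_i]_{i in I} is represented by listing its (indexed) elements.\<close>
inductive lifting :: "(trm \<Rightarrow> bool) \<Rightarrow> (trm \<Rightarrow> mdist \<Rightarrow> bool) \<Rightarrow> mdist \<Rightarrow> mdist \<Rightarrow> bool"
  for ok r where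
  lift_refl: "ok M \<Longrightarrow> lifting ok r {#(1, M)#} {#(1, M)#}"
| lift_step: "r M m \<Longrightarrow> lifting ok r {#(1, M)#} m"
| lift_sum: "(\<forall>(p, M, m)\<in>set xs. lifting ok r {#(1, M)#} m) \<Longrightarrow>
     lifting ok r (mset (map (\<lambda>(p, M, m). (p, M)) xs))
                  (sum_list (map (\<lambda>(p, M, m). scale p m) xs))"

definition Rlift :: "mdist \<Rightarrow> mdist \<Rightarrow> bool" where
  "Rlift = lifting (\<lambda>_. True) red"

definition Elift :: "mdist \<Rightarrow> mdist \<Rightarrow> bool" where
  "Elift = lifting normal ered"

definition obs :: "mdist \<Rightarrow> trm \<Rightarrow> real" where
  "obs m N = (if normal N then sum_mset (image_mset fst (filter_mset (\<lambda>x. snd x = N) m)) else 0)"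

definition max_seq :: "(mdist \<Rightarrow> mdist \<Rightarrow> bool) \<Rightarrow> mdist \<Rightarrow> (nat \<Rightarrow> mdist) \<Rightarrow> bool" where
  "max_seq R m s \<longleftrightarrow> s 0 = m \<and>
     (\<forall>n. R (s n) (s (Suc n)) \<or> ((\<not> (\<exists>x. R (s n) x)) \<and> s (Suc n) = s n))"

definition Lim :: "(mdist \<Rightarrow> mdist \<Rightarrow> bool) \<Rightarrow> mdist \<Rightarrow> (trm \<Rightarrow> real) set" where
  "Lim R m = {r. \<exists>s. max_seq R m s \<and> r = (\<lambda>N. SUP n. obs (s n) N)}"

definition obs_rel :: "(mdist \<Rightarrow> mdist \<Rightarrow> bool) \<Rightarrow> mdist \<Rightarrow> (trm \<Rightarrow> real) \<Rightarrow> bool" where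
  "obs_rel R m r \<longleftrightarrow> r \<in> Lim R m"

definition is_greatest :: "(trm \<Rightarrow> real) set \<Rightarrow> (trm \<Rightarrow> real) \<Rightarrow> bool" where
  "is_greatest A r \<longleftrightarrow> r \<in> A \<and> (\<forall>q\<in>A. q \<le> r)"

definition is_maximal :: "(trm \<Rightarrow> real) set \<Rightarrow> (trm \<Rightarrow> real) \<Rightarrow> bool" where
  "is_maximal A r \<longleftrightarrow> r \<in> A \<and> (\<forall>q\<in>A. r \<le> q \<longrightarrow> q = r)"

definition den :: "mdist \<Rightarrow> trm \<Rightarrow> real" where
  "den m = (THE r. is_greatest (Lim Rlift m) r)"

definition obs_normalizing :: "(mdist \<Rightarrow> mdist \<Rightarrow> bool) \<Rightarrow> (mdist \<Rightarrow> mdist \<Rightarrow> bool) \<Rightarrow> bool" where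
  "obs_normalizing R' R \<longleftrightarrow>
     (\<forall>m m'. is_mdist m \<longrightarrow> R' m m' \<longrightarrow> R m m') \<and>
     (\<forall>m q. is_mdist m \<longrightarrow> obs_rel R m q \<longrightarrow> (\<exists>p. obs_rel R' m p \<and> q \<le> p)) \<and>
     (\<forall>m. is_mdist m \<longrightarrow> (\<forall>r\<in>Lim R' m. is_maximal (Lim R' m) r))"

end

theory Submission
  imports Defs
begin


lemma lift_lift: "i \<le> k \<Longrightarrow> lift (Suc k) (lift i t) = lift i (lift k t)"
  by (induct t arbitrary: i k) auto

lemma lift_subst [simp]: "j \<le> i \<Longrightarrow> lift i (subst t j s) = subst (lift (Suc i) t) j (lift i s)"
  by (induct t arbitrary: i j s) (auto simp: lift_lift)

lemma lift_subst_lt: "i \<le> j \<Longrightarrow> lift i (subst t j s) = subst (lift i t) (Suc j) (lift i s)"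
  by (induct t arbitrary: i j s) (auto simp: lift_lift)

lemma subst_lift [simp]: "subst (lift k t) k s = t"
  by (induct t arbitrary: k s) auto

lemma subst_subst: "i \<le> j \<Longrightarrow>
  subst (subst t (Suc j) (lift i v)) i (subst u j v) = subst (subst t i u) j v"
proof (induct t arbitrary: i j u v)
  case (Lam t)
  have "lift 0 (lift i v) = lift (Suc i) (lift 0 v)" by (simp add: lift_lift)
  moreover have "lift 0 (subst u j v) = subst (lift 0 u) (Suc j) (lift 0 v)" by (simp add: lift_subst_lt)
  ultimately show ?case using Lam by simp
qed auto

lemma is_val_lift [simp]: "is_val (lift k t) = is_val t"
  by (cases t) auto

lemma is_val_subst: "is_val t \<Longrightarrow> is_val s \<Longrightarrow> is_val (subst t k s)"
  by (cases t) auto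

inductive par :: "trm \<Rightarrow> trm \<Rightarrow> bool" where
  par_var: "par (Var i) (Var i)"
| par_lam: "par M M' \<Longrightarrow> par (Lam M) (Lam M')"
| par_app: "par M M' \<Longrightarrow> par N N' \<Longrightarrow> par (App M N) (App M' N')"
| par_choice: "par M M' \<Longrightarrow> par N N' \<Longrightarrow> par (Choice M N) (Choice M' N')"
| par_beta: "par M M' \<Longrightarrow> par V V' \<Longrightarrow> is_val V \<Longrightarrow> par (App (Lam M) V) (subst M' 0 V')"

inductive ipar :: "trm \<Rightarrow> trm \<Rightarrow> bool" where
  ipar_var: "ipar (Var i) (Var i)"
| ipar_lam: "par M M' \<Longrightarrow> ipar (Lam M) (Lam M')"
| ipar_app: "ipar M M' \<Longrightarrow> ipar N N' \<Longrightarrow> ipar (App M N) (App M' N')"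
| ipar_choice: "par M M' \<Longrightarrow> par N N' \<Longrightarrow> ipar (Choice M N) (Choice M' N')"

declare par.intros [intro] ipar.intros [intro]


lemma par_refl [simp, intro]: "par t t"
  by (induct t) auto

lemma ipar_refl [simp, intro]: "ipar t t"
  by (induct t) auto

lemma ipar_par: "ipar t u \<Longrightarrow> par t u"
  by (induct rule: ipar.induct) auto

lemma par_val: "par V V' \<Longrightarrow> is_val V \<Longrightarrow> is_val V'"
  by (cases rule: par.cases) auto

lemma ipar_val: "ipar V V' \<Longrightarrow> is_val V \<Longrightarrow> is_val V'"
  by (cases rule: ipar.cases) auto

lemma ipar_val_back: "ipar V V' \<Longrightarrow> is_val V' \<Longrightarrow> is_val V"
  by (cases rule: ipar.cases) auto

lemma par_lift: "par t u \<Longrightarrow> par (lift k t) (lift k u)"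
proof (induct arbitrary: k rule: par.induct)
  case (par_beta M M' V V')
  have "par (App (Lam (lift (Suc k) M)) (lift k V)) (subst (lift (Suc k) M') 0 (lift k V'))"
    using par_beta by (intro par.par_beta) auto
  then show ?case by simp
qed auto

lemma par_subst: "par t t' \<Longrightarrow> par s s' \<Longrightarrow> is_val s \<Longrightarrow> par (subst t k s) (subst t' k s')"
proof (induct arbitrary: k s s' rule: par.induct)
  case (par_lam M M')
  have "par (subst M (Suc k) (lift 0 s)) (subst M' (Suc k) (lift 0 s'))"
    using par_lam(2)[of "lift 0 s" "lift 0 s'" "Suc k"] par_lift[OF par_lam(3)] par_lam(4) by auto
  then show ?case by auto
next
  case (par_beta M M' V V')
  have "par (App (Lam (subst M (Suc k) (lift 0 s))) (subst V k s))
     (subst (subst M' (Suc k) (lift 0 s')) 0 (subst V' k s'))"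
    using par_beta par_beta(2)[of "lift 0 s" "lift 0 s'" "Suc k"] par_lift[OF par_beta(6)]
    by (intro par.par_beta) (auto intro: is_val_subst)
  moreover have "subst (subst M' (Suc k) (lift 0 s')) 0 (subst V' k s') = subst (subst M' 0 V') k s'"
    using subst_subst[of 0 k M' s' V'] by simp
  ultimately show ?case by simp
qed auto

lemma ipar_lift: "ipar t u \<Longrightarrow> ipar (lift k t) (lift k u)"
  by (induct arbitrary: k rule: ipar.induct) (auto intro: par_lift)

lemma ipar_subst: "ipar t t' \<Longrightarrow> ipar s s' \<Longrightarrow> is_val s \<Longrightarrow> ipar (subst t k s) (subst t' k s')"
proof (induct arbitrary: k s s' rule: ipar.induct)
  case (ipar_lam M M')
  have "par (subst M (Suc k) (lift 0 s)) (subst M' (Suc k) (lift 0 s'))"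
    using ipar_lam par_subst par_lift ipar_par by auto
  then show ?case by auto
next
  case (ipar_choice M M' N N')
  then show ?case using ipar_par[OF ipar_choice(3)] by (auto intro!: ipar.ipar_choice par_subst)
qed auto

lemma beta_w_subst: "beta_w t u \<Longrightarrow> is_val s \<Longrightarrow> beta_w (subst t k s) (subst u k s)"
proof (induct arbitrary: k s rule: beta_w.induct)
  case (betaw_root V M)
  have "beta_w (App (Lam (subst M (Suc k) (lift 0 s))) (subst V k s))
     (subst (subst M (Suc k) (lift 0 s)) 0 (subst V k s))"
    using betaw_root by (intro beta_w.betaw_root) (auto intro: is_val_subst)
  moreover have "subst (subst M (Suc k) (lift 0 s)) 0 (subst V k s) = subst (subst M 0 V) k s"
    using subst_subst[of 0 k M s V] by simp
  ultimately show ?case by simp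
qed (auto intro: beta_w.intros)

lemma beta_par: "beta t u \<Longrightarrow> par t u"
  by (induct rule: beta.induct) auto

lemma beta_w_par: "beta_w t u \<Longrightarrow> par t u"
  by (induct rule: beta_w.induct) auto

lemma beta_w_beta: "beta_w t u \<Longrightarrow> beta t u"
  by (induct rule: beta_w.induct) (auto intro: beta.intros)



abbreviation wstar where "wstar \<equiv> beta_w\<^sup>*\<^sup>*"

lemma wstar_appL: "wstar M M' \<Longrightarrow> wstar (App M N) (App M' N)"
  by (induct rule: rtranclp_induct) (auto intro: rtranclp.rtrancl_into_rtrancl beta_w.intros)

lemma wstar_appR: "wstar N N' \<Longrightarrow> wstar (App M N) (App M N')"
  by (induct rule: rtranclp_induct) (auto intro: rtranclp.rtrancl_into_rtrancl beta_w.intros)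

lemma wstar_subst: "wstar t u \<Longrightarrow> is_val s \<Longrightarrow> wstar (subst t k s) (subst u k s)"
  by (induct rule: rtranclp_induct) (auto intro: rtranclp.rtrancl_into_rtrancl beta_w_subst)

lemma val_no_beta_w: "beta_w V X \<Longrightarrow> is_val V \<Longrightarrow> False"
  by (cases rule: beta_w.cases) auto

lemma val_wstar: "wstar V X \<Longrightarrow> is_val V \<Longrightarrow> X = V"
  by (induct rule: rtranclp_induct) (auto dest: val_no_beta_w)

lemma TF: "par M M' \<Longrightarrow> \<exists>M0. wstar M M0 \<and> ipar M0 M'"
proof (induct rule: par.induct)
  case (par_var i)
  then show ?case by auto
next
  case (par_lam M M')
  then show ?case by (intro exI[of _ "Lam M"]) auto
next
  case (par_app M M' N N')
  then obtain M0 N0 where "wstar M M0" "ipar M0 M'" "wstar N N0" "ipar N0 N'" by blast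
  then show ?case
    by (intro exI[of _ "App M0 N0"]) (auto intro: rtranclp_trans wstar_appL wstar_appR)
next
  case (par_choice M M' N N')
  then show ?case by (intro exI[of _ "Choice M N"]) auto
next
  case (par_beta M M' V V')
  then obtain M0 V0 where "wstar M M0" "ipar M0 M'" "wstar V V0" "ipar V0 V'" by blast
  with par_beta have V0: "V0 = V" using val_wstar by blast
  have "beta_w (App (Lam M) V) (subst M 0 V)" using par_beta by (auto intro: beta_w.intros)
  moreover have "wstar (subst M 0 V) (subst M0 0 V)"
    using wstar_subst \<open>wstar M M0\<close> par_beta by blast
  moreover have "ipar (subst M0 0 V) (subst M' 0 V')"
    using ipar_subst \<open>ipar M0 M'\<close> \<open>ipar V0 V'\<close> V0 par_beta by blast
  ultimately show ?case by (meson converse_rtranclp_into_rtranclp)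
qed

lemma ipar_LamE: "ipar M (Lam X') \<Longrightarrow> \<exists>X. M = Lam X \<and> par X X'"
  by (cases rule: ipar.cases) auto
lemma ipar_VarE: "ipar M (Var i) \<Longrightarrow> M = Var i"
  by (cases rule: ipar.cases) auto
lemma ipar_AppE: "ipar M (App A' B') \<Longrightarrow> \<exists>A B. M = App A B \<and> ipar A A' \<and> ipar B B'"
  by (cases rule: ipar.cases) auto
lemma ipar_ChoiceE: "ipar M (Choice A' B') \<Longrightarrow> \<exists>A B. M = Choice A B \<and> par A A' \<and> par B B'"
  by (cases rule: ipar.cases) auto

lemma WC: "beta_w M' M'' \<Longrightarrow> ipar M0 M' \<Longrightarrow> \<exists>N. beta_w M0 N \<and> par N M''"
proof (induct arbitrary: M0 rule: beta_w.induct)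
  case (betaw_root V M)
  then obtain A B where AB: "M0 = App A B" "ipar A (Lam M)" "ipar B V" using ipar_AppE by blast
  then obtain X where X: "A = Lam X" "par X M" using ipar_LamE by blast
  have vB: "is_val B" using ipar_val_back AB betaw_root by blast
  have "beta_w M0 (subst X 0 B)" using AB X vB by (auto intro: beta_w.intros)
  moreover have "par (subst X 0 B) (subst M 0 V)" using par_subst X AB ipar_par vB by blast
  ultimately show ?case by blast
next
  case (betaw_appL M M' N)
  then obtain A B where AB: "M0 = App A B" "ipar A M" "ipar B N" using ipar_AppE by blast
  then obtain A1 where "beta_w A A1" "par A1 M'" using betaw_appL by blast
  then show ?case using AB ipar_par by (intro exI[of _ "App A1 B"]) (auto intro: beta_w.intros)
next
  case (betaw_appR N N' M)
  then obtain A B where AB: "M0 = App A B" "ipar A M" "ipar B N" using ipar_AppE by blast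
  then obtain B1 where "beta_w B B1" "par B1 N'" using betaw_appR by blast
  then show ?case using AB ipar_par by (intro exI[of _ "App A B1"]) (auto intro: beta_w.intros)
qed



definition HC :: "trm \<Rightarrow> bool" where "HC M \<longleftrightarrow> (\<exists>A B. choice_split M A B)"

lemma snormal_iff: "snormal M \<longleftrightarrow> wnormal M \<and> \<not> HC M"
  unfolding snormal_def wnormal_def HC_def sred_def oplus_step_def by blast

lemma normal_iff: "normal M \<longleftrightarrow> (\<not> (\<exists>N. beta M N)) \<and> \<not> HC M"
  unfolding normal_def HC_def red_def oplus_step_def by blast

lemma wnormal_Lam [simp]: "wnormal (Lam P)"
  unfolding wnormal_def by (auto elim: beta_w.cases)
lemma wnormal_Var [simp]: "wnormal (Var i)"
  unfolding wnormal_def by (auto elim: beta_w.cases)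
lemma wnormal_Choice [simp]: "wnormal (Choice P Q)"
  unfolding wnormal_def by (auto elim: beta_w.cases)
lemma wnormal_AppD: "wnormal (App P Q) \<Longrightarrow> wnormal P \<and> wnormal Q"
  unfolding wnormal_def by (auto intro: beta_w.intros)
lemma wnormal_App_redex: "wnormal (App (Lam X) V) \<Longrightarrow> is_val V \<Longrightarrow> False"
  unfolding wnormal_def by (auto intro: beta_w.intros)

lemma beta_w_wnormal: "beta_w M N \<Longrightarrow> \<not> wnormal M"
  unfolding wnormal_def by blast

lemma beta_to_Lam: "beta P L \<Longrightarrow> L = Lam X' \<Longrightarrow> wnormal P \<Longrightarrow> \<exists>X. P = Lam X"
  by (cases rule: beta.cases) (auto dest: wnormal_App_redex)

lemma beta_to_val: "beta Q Q' \<Longrightarrow> is_val Q' \<Longrightarrow> wnormal Q \<Longrightarrow> is_val Q"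
  by (cases rule: beta.cases) (auto dest: wnormal_App_redex)

lemma wnormal_App_iff: "wnormal (App P Q) \<longleftrightarrow> wnormal P \<and> wnormal Q \<and> \<not> ((\<exists>X. P = Lam X) \<and> is_val Q)"
proof
  assume a: "wnormal (App P Q)"
  then show "wnormal P \<and> wnormal Q \<and> \<not> ((\<exists>X. P = Lam X) \<and> is_val Q)"
    using wnormal_AppD wnormal_App_redex by blast
next
  assume a: "wnormal P \<and> wnormal Q \<and> \<not> ((\<exists>X. P = Lam X) \<and> is_val Q)"
  show "wnormal (App P Q)" unfolding wnormal_def
  proof
    assume "\<exists>X. beta_w (App P Q) X"
    then obtain X where "beta_w (App P Q) X" by blast
    then show False
    proof (cases rule: beta_w.cases)
      case (betaw_root M)
      then show False using a by blast
    next
      case (betaw_appL M1)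
      then show False using a by (simp add: wnormal_def)
    next
      case (betaw_appR N1)
      then show False using a by (simp add: wnormal_def)
    qed
  qed
qed

lemma wnormal_beta: "beta M M' \<Longrightarrow> wnormal M \<Longrightarrow> wnormal M'"
proof (induct rule: beta.induct)
  case (beta_root V M)
  then show ?case using wnormal_App_redex by blast
next
  case (beta_appL M M' N)
  then have "wnormal M" "wnormal N" "\<not> ((\<exists>X. M = Lam X) \<and> is_val N)"
    by (simp_all add: wnormal_App_iff)
  moreover have "(\<exists>X. M' = Lam X) \<Longrightarrow> \<exists>X. M = Lam X"
    using beta_to_Lam beta_appL(1) \<open>wnormal M\<close> by blast
  ultimately show ?case using beta_appL(2) by (auto simp add: wnormal_App_iff)
next
  case (beta_appR N N' M)
  then have "wnormal M" "wnormal N" "\<not> ((\<exists>X. M = Lam X) \<and> is_val N)"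
    by (simp_all add: wnormal_App_iff)
  moreover have "is_val N' \<Longrightarrow> is_val N"
    using beta_to_val beta_appR(1) \<open>wnormal N\<close> by blast
  ultimately show ?case using beta_appR(2) by (auto simp add: wnormal_App_iff)
qed auto

lemma Lam_no_split: "choice_split (Lam X) A B \<Longrightarrow> False"
  by (cases rule: choice_split.cases) auto

lemma val_no_split: "choice_split V A B \<Longrightarrow> is_val V \<Longrightarrow> False"
  by (cases rule: choice_split.cases) auto

lemma HC_beta_back: "beta M M' \<Longrightarrow> wnormal M \<Longrightarrow> HC M' \<Longrightarrow> HC M"
proof (induct rule: beta.induct)
  case (beta_root V M)
  then show ?case using wnormal_App_redex by blast
next
  case (beta_appL M M' N)
  from beta_appL.prems(2) obtain A B where "choice_split (App M' N) A B" unfolding HC_def by blast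
  then show ?case
  proof (cases rule: choice_split.cases)
    case (cs_appL A1 B1)
    then have "HC M" using beta_appL wnormal_AppD unfolding HC_def by blast
    then show ?thesis unfolding HC_def by (auto intro: choice_split.intros)
  next
    case (cs_appR A1 B1)
    then show ?thesis unfolding HC_def by (auto intro: choice_split.intros)
  qed
next
  case (beta_appR N N' M)
  from beta_appR.prems(2) obtain A B where "choice_split (App M N') A B" unfolding HC_def by blast
  then show ?case
  proof (cases rule: choice_split.cases)
    case (cs_appL A1 B1)
    then show ?thesis unfolding HC_def by (auto intro: choice_split.intros)
  next
    case (cs_appR A1 B1)
    then have "HC N" using beta_appR wnormal_AppD unfolding HC_def by blast
    then show ?thesis unfolding HC_def by (auto intro: choice_split.intros)
  qed
next
  case (beta_lam M M')
  then show ?case unfolding HC_def by (auto elim: choice_split.cases)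
next
  case (beta_choiceL M M' N)
  then show ?case unfolding HC_def by (blast intro: choice_split.cs_root)
next
  case (beta_choiceR N N' M)
  then show ?case unfolding HC_def by (blast intro: choice_split.cs_root)
qed

lemma snormal_beta: "beta M M' \<Longrightarrow> snormal M \<Longrightarrow> snormal M'"
  using wnormal_beta HC_beta_back snormal_iff by blast

lemma HC_par_aux: "choice_split M A B \<Longrightarrow> par M M' \<Longrightarrow> HC M'"
proof (induct arbitrary: M' rule: choice_split.induct)
  case (cs_root M N)
  from cs_root obtain X Y where "M' = Choice X Y" by (cases rule: par.cases) auto
  then show ?case unfolding HC_def by (blast intro: choice_split.intros)
next
  case (cs_appL M A B N)
  from cs_appL.prems show ?case
  proof (cases rule: par.cases)
    case (par_app M1 N1)
    then obtain a b where "choice_split M1 a b" using cs_appL(2) unfolding HC_def by blast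
    then show ?thesis using par_app unfolding HC_def by (blast intro: choice_split.intros)
  next
    case par_beta
    then show ?thesis using cs_appL(1) Lam_no_split by blast
  qed
next
  case (cs_appR N A B M)
  from cs_appR.prems show ?case
  proof (cases rule: par.cases)
    case (par_app M1 N1)
    then obtain a b where "choice_split N1 a b" using cs_appR(2) unfolding HC_def by blast
    then show ?thesis using par_app unfolding HC_def by (blast intro: choice_split.intros)
  next
    case par_beta
    then show ?thesis using cs_appR val_no_split by blast
  qed
qed

lemma HC_par: "HC M \<Longrightarrow> par M M' \<Longrightarrow> HC M'"
  using HC_par_aux unfolding HC_def by blast

lemma HC_beta: "HC M \<Longrightarrow> beta M M' \<Longrightarrow> HC M'"
  using HC_par beta_par by blast

lemma HC_betastar: "beta\<^sup>*\<^sup>* M M' \<Longrightarrow> HC M \<Longrightarrow> HC M'"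
  by (induct rule: rtranclp_induct) (auto intro: HC_beta)

lemma ipar_beta_w: "beta_w M0 X \<Longrightarrow> ipar M0 M' \<Longrightarrow> \<exists>Y. beta_w M' Y"
proof (induct arbitrary: M' rule: beta_w.induct)
  case (betaw_root V M)
  from betaw_root.prems obtain A B where "M' = App A B" "ipar (Lam M) A" "ipar V B" by (cases rule: ipar.cases) auto
  moreover from \<open>ipar (Lam M) A\<close> obtain X where "A = Lam X" by (cases rule: ipar.cases) auto
  ultimately show ?case using betaw_root ipar_val by (blast intro: beta_w.intros)
next
  case (betaw_appL M M1 N)
  from betaw_appL.prems obtain A B where "M' = App A B" "ipar M A" "ipar N B" by (cases rule: ipar.cases) auto
  then show ?case using betaw_appL by (blast intro: beta_w.intros)
next
  case (betaw_appR N N1 M)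
  from betaw_appR.prems obtain A B where "M' = App A B" "ipar M A" "ipar N B" by (cases rule: ipar.cases) auto
  then show ?case using betaw_appR by (blast intro: beta_w.intros)
qed

lemma ipar_wnormal: "ipar M0 M' \<Longrightarrow> wnormal M' \<Longrightarrow> wnormal M0"
  unfolding wnormal_def using ipar_beta_w by blast

lemma ipar_split: "choice_split M' A' B' \<Longrightarrow> ipar M0 M' \<Longrightarrow>
   \<exists>A B. choice_split M0 A B \<and> par A A' \<and> par B B'"
proof (induct arbitrary: M0 rule: choice_split.induct)
  case (cs_root M N)
  then show ?case by (auto dest!: ipar_ChoiceE intro: choice_split.intros)
next
  case (cs_appL M A B N)
  then obtain P Q where PQ: "M0 = App P Q" "ipar P M" "ipar Q N" using ipar_AppE by blast
  with cs_appL obtain a b where "choice_split P a b" "par a A" "par b B" by blast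
  then show ?case using PQ ipar_par
    by (intro exI[of _ "App a Q"] exI[of _ "App b Q"]) (auto intro: choice_split.intros)
next
  case (cs_appR N A B M)
  then obtain P Q where PQ: "M0 = App P Q" "ipar P M" "ipar Q N" using ipar_AppE by blast
  with cs_appR obtain a b where "choice_split Q a b" "par a A" "par b B" by blast
  then show ?case using PQ ipar_par
    by (intro exI[of _ "App P a"] exI[of _ "App P b"]) (auto intro: choice_split.intros)
qed

lemma ured_beta: "ured M M' \<Longrightarrow> beta M M'"
  by (induct rule: ured.induct) (auto intro: beta.intros beta_w_beta)

lemma beta_ex_ured: "beta M N \<Longrightarrow> \<exists>N'. ured M N'"
proof (induct rule: beta.induct)
  case (beta_root V M)
  then show ?case by (blast intro: ured.intros beta_w.intros)
next
  case (beta_appL M M' N)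
  show ?case
  proof (cases "wnormal (App M N)")
    case True
    then show ?thesis using beta_appL(2) by (blast intro: ured.ured_appL)
  next
    case False
    then show ?thesis unfolding wnormal_def by (blast intro: ured.ured_w)
  qed
next
  case (beta_appR N N' M)
  show ?case
  proof (cases "wnormal (App M N)")
    case True
    then show ?thesis using beta_appR(2) by (blast intro: ured.ured_appR)
  next
    case False
    then show ?thesis unfolding wnormal_def by (blast intro: ured.ured_w)
  qed
next
  case (beta_lam M M')
  then show ?case by (blast intro: ured.ured_lam wnormal_Lam)
next
  case (beta_choiceL M M' N)
  then show ?case by (blast intro: ured.ured_choiceL wnormal_Choice)
next
  case (beta_choiceR N N' M)
  then show ?case by (blast intro: ured.ured_choiceR wnormal_Choice)
qed

lemma ured_not_wnormal: "ured M M' \<Longrightarrow> \<not> wnormal M \<Longrightarrow> beta_w M M'"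
  by (cases rule: ured.cases) auto



lemma beta_w_diamond: "beta_w M M1 \<Longrightarrow> beta_w M M2 \<Longrightarrow> M1 = M2 \<or> (\<exists>P. beta_w M1 P \<and> beta_w M2 P)"
proof (induct arbitrary: M2 rule: beta_w.induct)
  case (betaw_root V M)
  from betaw_root(2) show ?case
  proof (cases rule: beta_w.cases)
    case (betaw_appL M')
    then show ?thesis by (auto elim: beta_w.cases)
  next
    case (betaw_appR N')
    then show ?thesis using betaw_root(1) val_no_beta_w by blast
  qed auto
next
  case (betaw_appL M M' N)
  note IH = betaw_appL(2) and st = betaw_appL(1)
  from betaw_appL(3) show ?case
  proof (cases rule: beta_w.cases)
    case (betaw_root X)
    then show ?thesis using betaw_appL(1) by (auto elim: beta_w.cases)
  next
    case (betaw_appL M1')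
    then obtain R where "M' = M1' \<or> (beta_w M' R \<and> beta_w M1' R)" using IH by blast
    then show ?thesis using \<open>M2 = App M1' N\<close> by (auto intro: beta_w.intros)
  next
    case (betaw_appR N1)
    then show ?thesis using betaw_appL(1) by (auto intro: beta_w.intros)
  qed
next
  case (betaw_appR N N' M)
  note IH = betaw_appR(2)
  from betaw_appR(3) show ?case
  proof (cases rule: beta_w.cases)
    case (betaw_root X)
    then show ?thesis using betaw_appR(1) val_no_beta_w by blast
  next
    case (betaw_appL M1')
    then show ?thesis using betaw_appR(1) by (auto intro: beta_w.intros)
  next
    case (betaw_appR N1)
    then obtain R where "N' = N1 \<or> (beta_w N' R \<and> beta_w N1 R)" using IH by blast
    then show ?thesis using \<open>M2 = App M N1\<close> by (auto intro: beta_w.intros)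
  qed
qed

lemma ured_wnormal: "ured M M' \<Longrightarrow> wnormal M \<Longrightarrow> wnormal M'"
  using ured_beta wnormal_beta by blast

lemma ured_diamond: "ured M M1 \<Longrightarrow> ured M M2 \<Longrightarrow> M1 = M2 \<or> (\<exists>P. ured M1 P \<and> ured M2 P)"
proof (induct arbitrary: M2 rule: ured.induct)
  case (ured_w M M')
  then have "\<not> wnormal M" using beta_w_wnormal by blast
  then have "beta_w M M2" using ured_w ured_not_wnormal by blast
  then show ?case using beta_w_diamond ured_w(1) by (blast intro: ured.ured_w)
next
  case (ured_lam P P')
  note IH = ured_lam.hyps(3)
  from ured_lam(4) show ?case
  proof (cases rule: ured.cases)
    case ured_w
    then show ?thesis using beta_w_wnormal by fastforce
  next
    case (ured_lam P2)
    then obtain R where "P' = P2 \<or> (ured P' R \<and> ured P2 R)" using IH by blast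
    then show ?thesis using \<open>M2 = Lam P2\<close> by (metis ured.ured_lam wnormal_Lam)
  qed
next
  case (ured_appL P Q P')
  note IH = ured_appL.hyps(3) and H = ured_appL.hyps
  have wPQ: "wnormal (App P Q)" by fact
  from ured_appL(4) show ?case
  proof (cases rule: ured.cases)
    case ured_w
    then show ?thesis using beta_w_wnormal wPQ by blast
  next
    case (ured_appL P2)
    then obtain R where "P' = P2 \<or> (ured P' R \<and> ured P2 R)" using IH by blast
    then show ?thesis
    proof
      assume "P' = P2" then show ?thesis using \<open>M2 = App P2 Q\<close> by simp
    next
      assume "ured P' R \<and> ured P2 R"
      moreover have "wnormal (App P' Q)" "wnormal (App P2 Q)"
        using ured_wnormal[OF _ wPQ] H \<open>ured P P2\<close> by (auto intro: ured.intros)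
      ultimately show ?thesis using \<open>M2 = App P2 Q\<close> by (metis ured.ured_appL)
    qed
  next
    case (ured_appR Q2)
    moreover have "wnormal (App P' Q)" "wnormal (App P Q2)"
      using ured_wnormal[OF _ wPQ] H calculation by (auto intro: ured.intros)
    ultimately show ?thesis using H
      by (intro disjI2 exI[of _ "App P' Q2"]) (auto intro: ured.intros)
  qed
next
  case (ured_appR P Q Q')
  note IH = ured_appR.hyps(3) and H = ured_appR.hyps
  have wPQ: "wnormal (App P Q)" by fact
  from ured_appR(4) show ?case
  proof (cases rule: ured.cases)
    case ured_w
    then show ?thesis using beta_w_wnormal wPQ by blast
  next
    case (ured_appR Q2)
    then obtain R where "Q' = Q2 \<or> (ured Q' R \<and> ured Q2 R)" using IH by blast
    then show ?thesis
    proof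
      assume "Q' = Q2" then show ?thesis using \<open>M2 = App P Q2\<close> by simp
    next
      assume "ured Q' R \<and> ured Q2 R"
      moreover have "wnormal (App P Q')" "wnormal (App P Q2)"
        using ured_wnormal[OF _ wPQ] H \<open>ured Q Q2\<close> by (auto intro: ured.intros)
      ultimately show ?thesis using \<open>M2 = App P Q2\<close> by (metis ured.ured_appR)
    qed
  next
    case (ured_appL P2)
    moreover have "wnormal (App P Q')" "wnormal (App P2 Q)"
      using ured_wnormal[OF _ wPQ] H calculation by (auto intro: ured.intros)
    ultimately show ?thesis using H
      by (intro disjI2 exI[of _ "App P2 Q'"]) (auto intro: ured.intros)
  qed
next
  case (ured_choiceL P Q P')
  note IH = ured_choiceL.hyps(3) and H = ured_choiceL.hyps
  from ured_choiceL(4) show ?case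
  proof (cases rule: ured.cases)
    case ured_w
    then show ?thesis using beta_w_wnormal by fastforce
  next
    case (ured_choiceL P2)
    then obtain R where "P' = P2 \<or> (ured P' R \<and> ured P2 R)" using IH by blast
    then show ?thesis using \<open>M2 = Choice P2 Q\<close> by (metis ured.ured_choiceL wnormal_Choice)
  next
    case (ured_choiceR Q2)
    then show ?thesis using H
      by (intro disjI2 exI[of _ "Choice P' Q2"]) (auto intro: ured.intros)
  qed
next
  case (ured_choiceR P Q Q')
  note IH = ured_choiceR.hyps(3) and H = ured_choiceR.hyps
  from ured_choiceR(4) show ?case
  proof (cases rule: ured.cases)
    case ured_w
    then show ?thesis using beta_w_wnormal by fastforce
  next
    case (ured_choiceR Q2)
    then obtain R where "Q' = Q2 \<or> (ured Q' R \<and> ured Q2 R)" using IH by blast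
    then show ?thesis using \<open>M2 = Choice P Q2\<close> by (metis ured.ured_choiceR wnormal_Choice)
  next
    case (ured_choiceL P2)
    then show ?thesis using H
      by (intro disjI2 exI[of _ "Choice P2 Q'"]) (auto intro: ured.intros)
  qed
qed



lemma BO: "beta_w M N \<Longrightarrow> choice_split M A B \<Longrightarrow>
  \<exists>A' B'. choice_split N A' B' \<and> beta_w A A' \<and> beta_w B B'"
proof (induct arbitrary: A B rule: beta_w.induct)
  case (betaw_root V M)
  from betaw_root(2) show ?case
  proof (cases rule: choice_split.cases)
    case (cs_appL A1 B1)
    then show ?thesis using Lam_no_split by blast
  next
    case (cs_appR A1 B1)
    then show ?thesis using val_no_split betaw_root(1) by blast
  qed
next
  case (betaw_appL M M' N)
  note IH = betaw_appL(2) and st = betaw_appL(1)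
  from betaw_appL(3) show ?case
  proof (cases rule: choice_split.cases)
    case (cs_appL A1 B1)
    then obtain A' B' where "choice_split M' A' B'" "beta_w A1 A'" "beta_w B1 B'" using IH by blast
    then show ?thesis using cs_appL
      by (intro exI[of _ "App A' N"] exI[of _ "App B' N"]) (blast intro: choice_split.intros beta_w.intros)
  next
    case (cs_appR A1 B1)
    then show ?thesis using st
      by (intro exI[of _ "App M' A1"] exI[of _ "App M' B1"]) (blast intro: choice_split.intros beta_w.intros)
  qed
next
  case (betaw_appR N N' M)
  note IH = betaw_appR(2) and st = betaw_appR(1)
  from betaw_appR(3) show ?case
  proof (cases rule: choice_split.cases)
    case (cs_appR A1 B1)
    then obtain A' B' where "choice_split N' A' B'" "beta_w A1 A'" "beta_w B1 B'" using IH by blast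
    then show ?thesis using cs_appR
      by (intro exI[of _ "App M A'"] exI[of _ "App M B'"]) (blast intro: choice_split.intros beta_w.intros)
  next
    case (cs_appL A1 B1)
    then show ?thesis using st
      by (intro exI[of _ "App A1 N'"] exI[of _ "App B1 N'"]) (blast intro: choice_split.intros beta_w.intros)
  qed
qed

lemma OO: "choice_split M A1 B1 \<Longrightarrow> choice_split M A2 B2 \<Longrightarrow> (A1 = A2 \<and> B1 = B2) \<or>
  (\<exists>X Y Z W. choice_split A1 X Y \<and> choice_split B1 Z W \<and> choice_split A2 X Z \<and> choice_split B2 Y W)"
proof (induct arbitrary: A2 B2 rule: choice_split.induct)
  case (cs_root M N)
  then show ?case by (cases rule: choice_split.cases) auto
next
  case (cs_appL M A B N)
  note IH = cs_appL(2) and st = cs_appL(1)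
  from cs_appL(3) show ?case
  proof (cases rule: choice_split.cases)
    case (cs_appL a b)
    then have "(A = a \<and> B = b) \<or> (\<exists>X Y Z W. choice_split A X Y \<and> choice_split B Z W \<and> choice_split a X Z \<and> choice_split b Y W)"
      using IH by blast
    then show ?thesis
    proof
      assume "A = a \<and> B = b" then show ?thesis using cs_appL by simp
    next
      assume "\<exists>X Y Z W. choice_split A X Y \<and> choice_split B Z W \<and> choice_split a X Z \<and> choice_split b Y W"
      then obtain X Y Z W where "choice_split A X Y" "choice_split B Z W" "choice_split a X Z" "choice_split b Y W" by blast
      then show ?thesis using cs_appL
        by (intro disjI2 exI[of _ "App X N"] exI[of _ "App Y N"] exI[of _ "App Z N"] exI[of _ "App W N"])
          (blast intro: choice_split.intros)
    qed
  next
    case (cs_appR a b)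
    then show ?thesis using st
      by (intro disjI2 exI[of _ "App A a"] exI[of _ "App A b"] exI[of _ "App B a"] exI[of _ "App B b"])
        (blast intro: choice_split.intros)
  qed
next
  case (cs_appR N A B M)
  note IH = cs_appR(2) and st = cs_appR(1)
  from cs_appR(3) show ?case
  proof (cases rule: choice_split.cases)
    case (cs_appR a b)
    then have "(A = a \<and> B = b) \<or> (\<exists>X Y Z W. choice_split A X Y \<and> choice_split B Z W \<and> choice_split a X Z \<and> choice_split b Y W)"
      using IH by blast
    then show ?thesis
    proof
      assume "A = a \<and> B = b" then show ?thesis using cs_appR by simp
    next
      assume "\<exists>X Y Z W. choice_split A X Y \<and> choice_split B Z W \<and> choice_split a X Z \<and> choice_split b Y W"
      then obtain X Y Z W where "choice_split A X Y" "choice_split B Z W" "choice_split a X Z" "choice_split b Y W" by blast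
      then show ?thesis using cs_appR
        by (intro disjI2 exI[of _ "App M X"] exI[of _ "App M Y"] exI[of _ "App M Z"] exI[of _ "App M W"])
          (blast intro: choice_split.intros)
    qed
  next
    case (cs_appL a b)
    then show ?thesis using st
      by (intro disjI2 exI[of _ "App a A"] exI[of _ "App b A"] exI[of _ "App a B"] exI[of _ "App b B"])
        (blast intro: choice_split.intros)
  qed
qed

abbreviation ustar where "ustar \<equiv> ured\<^sup>*\<^sup>*"

lemma ustar_lam: "ustar P P' \<Longrightarrow> ustar (Lam P) (Lam P')"
  by (induct rule: rtranclp_induct) (auto intro: rtranclp.rtrancl_into_rtrancl ured.ured_lam[OF wnormal_Lam])

lemma ustar_choiceL: "ustar P P' \<Longrightarrow> ustar (Choice P Q) (Choice P' Q)"
  by (induct rule: rtranclp_induct) (auto intro: rtranclp.rtrancl_into_rtrancl ured.ured_choiceL[OF wnormal_Choice])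

lemma ustar_choiceR: "ustar Q Q' \<Longrightarrow> ustar (Choice P Q) (Choice P Q')"
  by (induct rule: rtranclp_induct) (auto intro: rtranclp.rtrancl_into_rtrancl ured.ured_choiceR[OF wnormal_Choice])

lemma ustar_beta: "ustar M N \<Longrightarrow> beta\<^sup>*\<^sup>* M N"
  by (induct rule: rtranclp_induct) (auto intro: rtranclp.rtrancl_into_rtrancl ured_beta)

lemma wnormal_betastar: "beta\<^sup>*\<^sup>* M N \<Longrightarrow> wnormal M \<Longrightarrow> wnormal N"
  by (induct rule: rtranclp_induct) (auto intro: wnormal_beta)

lemma ustar_appL_aux: "ustar P P' \<Longrightarrow> wnormal (App P Q) \<Longrightarrow> ustar (App P Q) (App P' Q) \<and> wnormal (App P' Q)"
proof (induct rule: rtranclp_induct)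
  case (step y z)
  then have a: "ustar (App P Q) (App y Q)" "wnormal (App y Q)" by blast+
  then have "ured (App y Q) (App z Q)" using step(2) by (blast intro: ured.ured_appL)
  then show ?case using a ured_wnormal by (blast intro: rtranclp.rtrancl_into_rtrancl)
qed auto

lemma ustar_appR_aux: "ustar Q Q' \<Longrightarrow> wnormal (App P Q) \<Longrightarrow> ustar (App P Q) (App P Q') \<and> wnormal (App P Q')"
proof (induct rule: rtranclp_induct)
  case (step y z)
  then have a: "ustar (App P Q) (App P y)" "wnormal (App P y)" by blast+
  then have "ured (App P y) (App P z)" using step(2) by (blast intro: ured.ured_appR)
  then show ?case using a ured_wnormal by (blast intro: rtranclp.rtrancl_into_rtrancl)
qed auto

lemma wstar_ustar: "wstar M N \<Longrightarrow> ustar M N"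
  by (induct rule: rtranclp_induct) (auto intro: rtranclp.rtrancl_into_rtrancl ured.ured_w)

definition bnormal :: "trm \<Rightarrow> bool" where "bnormal M \<longleftrightarrow> \<not> (\<exists>N. beta M N)"

lemma bnormal_wnormal: "bnormal M \<Longrightarrow> wnormal M"
  unfolding bnormal_def wnormal_def using beta_w_beta by blast

lemma bnormal_Lam: "bnormal (Lam P) \<Longrightarrow> bnormal P"
  unfolding bnormal_def by (blast intro: beta.intros)
lemma bnormal_App: "bnormal (App P Q) \<Longrightarrow> bnormal P \<and> bnormal Q"
  unfolding bnormal_def by (blast intro: beta.intros)
lemma bnormal_Choice: "bnormal (Choice P Q) \<Longrightarrow> bnormal P \<and> bnormal Q"
  unfolding bnormal_def by (blast intro: beta.intros)

lemma NL: "par X Y \<Longrightarrow> bnormal Y \<Longrightarrow> ustar X Y"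
proof (induct Y arbitrary: X)
  case (Var i)
  obtain X0 where "wstar X X0" "ipar X0 (Var i)" using TF Var by blast
  then show ?case using ipar_VarE wstar_ustar by blast
next
  case (Lam P')
  obtain X0 where X0: "wstar X X0" "ipar X0 (Lam P')" using TF Lam by blast
  then obtain P where "X0 = Lam P" "par P P'" using ipar_LamE by blast
  then have "ustar X0 (Lam P')" using Lam.hyps Lam.prems(2) bnormal_Lam ustar_lam by blast
  then show ?case using X0 wstar_ustar by (blast intro: rtranclp_trans)
next
  case (App P' Q')
  obtain X0 where X0: "wstar X X0" "ipar X0 (App P' Q')" using TF App by blast
  then obtain P Q where PQ: "X0 = App P Q" "ipar P P'" "ipar Q Q'" using ipar_AppE by blast
  have bn: "bnormal P'" "bnormal Q'" using bnormal_App[OF App.prems(2)] by simp_all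
  have u1: "ustar P P'" using App.hyps(1) bn(1) PQ(2) ipar_par by blast
  have u2: "ustar Q Q'" using App.hyps(2) bn(2) PQ(3) ipar_par by blast
  note u = u1 u2
  have w: "wnormal (App P Q)" using ipar_wnormal X0(2) PQ(1) bnormal_wnormal App.prems(2) by blast
  have "ustar (App P Q) (App P' Q) \<and> wnormal (App P' Q)" using ustar_appL_aux u w by blast
  then have "ustar (App P Q) (App P' Q')" using ustar_appR_aux u by (blast intro: rtranclp_trans)
  then show ?case using X0 PQ wstar_ustar by (blast intro: rtranclp_trans)
next
  case (Choice P' Q')
  obtain X0 where X0: "wstar X X0" "ipar X0 (Choice P' Q')" using TF Choice by blast
  then obtain P Q where PQ: "X0 = Choice P Q" "par P P'" "par Q Q'" using ipar_ChoiceE by blast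
  have bn: "bnormal P'" "bnormal Q'" using bnormal_Choice[OF Choice.prems(2)] by simp_all
  have u1: "ustar P P'" using Choice.hyps(1) bn(1) PQ(2) by blast
  have u2: "ustar Q Q'" using Choice.hyps(2) bn(2) PQ(3) by blast
  note u = u1 u2
  have "ustar (Choice P Q) (Choice P' Q')" using u ustar_choiceL ustar_choiceR by (blast intro: rtranclp_trans)
  then show ?case using X0 PQ wstar_ustar by (blast intro: rtranclp_trans)
qed

lemma U: "ured M' M'' \<Longrightarrow> par M M' \<Longrightarrow> \<exists>N. ustar M N \<and> par N M''"
proof (induct arbitrary: M rule: ured.induct)
  case (ured_w M' M'')
  obtain M0 where M0: "wstar M M0" "ipar M0 M'" using TF ured_w by blast
  then obtain N where "beta_w M0 N" "par N M''" using WC ured_w by blast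
  then show ?case using M0 wstar_ustar by (blast intro: rtranclp.rtrancl_into_rtrancl ured.ured_w)
next
  case (ured_lam P' P'')
  obtain M0 where M0: "wstar M M0" "ipar M0 (Lam P')" using TF ured_lam by blast
  then obtain P where P: "M0 = Lam P" "par P P'" using ipar_LamE by blast
  then obtain N0 where "ustar P N0" "par N0 P''" using ured_lam by blast
  then have "ustar M0 (Lam N0)" "par (Lam N0) (Lam P'')" using P ustar_lam by auto
  then show ?case using M0 wstar_ustar by (blast intro: rtranclp_trans)
next
  case (ured_appL P' Q' P'')
  obtain M0 where M0: "wstar M M0" "ipar M0 (App P' Q')" using TF ured_appL by blast
  then obtain P Q where PQ: "M0 = App P Q" "ipar P P'" "ipar Q Q'" using ipar_AppE by blast
  have w: "wnormal (App P Q)" using ipar_wnormal M0 PQ ured_appL by blast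
  obtain N0 where "ustar P N0" "par N0 P''" using ured_appL PQ ipar_par by blast
  then have "ustar M0 (App N0 Q)" "par (App N0 Q) (App P'' Q')"
    using PQ w ustar_appL_aux ipar_par by auto
  then show ?case using M0 wstar_ustar by (blast intro: rtranclp_trans)
next
  case (ured_appR P' Q' Q'')
  obtain M0 where M0: "wstar M M0" "ipar M0 (App P' Q')" using TF ured_appR by blast
  then obtain P Q where PQ: "M0 = App P Q" "ipar P P'" "ipar Q Q'" using ipar_AppE by blast
  have w: "wnormal (App P Q)" using ipar_wnormal M0 PQ ured_appR by blast
  obtain N0 where "ustar Q N0" "par N0 Q''" using ured_appR PQ ipar_par by blast
  then have "ustar M0 (App P N0)" "par (App P N0) (App P' Q'')"
    using PQ w ustar_appR_aux ipar_par by auto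
  then show ?case using M0 wstar_ustar by (blast intro: rtranclp_trans)
next
  case (ured_choiceL P' Q' P'')
  obtain M0 where M0: "wstar M M0" "ipar M0 (Choice P' Q')" using TF ured_choiceL by blast
  then obtain P Q where PQ: "M0 = Choice P Q" "par P P'" "par Q Q'" using ipar_ChoiceE by blast
  obtain N0 where "ustar P N0" "par N0 P''" using ured_choiceL PQ by blast
  then have "ustar M0 (Choice N0 Q)" "par (Choice N0 Q) (Choice P'' Q')"
    using PQ ustar_choiceL by auto
  then show ?case using M0 wstar_ustar by (blast intro: rtranclp_trans)
next
  case (ured_choiceR P' Q' Q'')
  obtain M0 where M0: "wstar M M0" "ipar M0 (Choice P' Q')" using TF ured_choiceR by blast
  then obtain P Q where PQ: "M0 = Choice P Q" "par P P'" "par Q Q'" using ipar_ChoiceE by blast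
  obtain N0 where "ustar Q N0" "par N0 Q''" using ured_choiceR PQ by blast
  then have "ustar M0 (Choice P N0)" "par (Choice P N0) (Choice P' Q'')"
    using PQ ustar_choiceR by auto
  then show ?case using M0 wstar_ustar by (blast intro: rtranclp_trans)
qed



definition ext :: "(trm \<Rightarrow> trm \<Rightarrow> real) \<Rightarrow> mdist \<Rightarrow> trm \<Rightarrow> real" where
  "ext f m N = sum_mset (image_mset (\<lambda>(p, M). p * f M N) m)"

lemma ext_empty [simp]: "ext f {#} N = 0"
  by (simp add: ext_def)

lemma ext_add_mset [simp]: "ext f (add_mset (p, M) m) N = p * f M N + ext f m N"
  by (simp add: ext_def)

lemma ext_plus [simp]: "ext f (a + b) N = ext f a N + ext f b N"
  by (simp add: ext_def)

lemma ext_scale [simp]: "ext f (scale q m) N = q * ext f m N"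
  by (induct m) (auto simp: scale_def algebra_simps)

lemma ext_sum_list: "ext f (sum_list (map g xs)) N = sum_list (map (\<lambda>x. ext f (g x) N) xs)"
  by (induct xs) auto

lemma ext_mset_map: "ext f (mset (map (\<lambda>(p, M, m). (p, M)) xs)) N = sum_list (map (\<lambda>(p, M, m). p * f M N) xs)"
  by (induct xs) (auto simp: ext_def)

lemma scale_single [simp]: "scale p {#(q, M)#} = {#(p * q, M)#}"
  by (simp add: scale_def)

lemma scale_one [simp]: "scale 1 m = m"
  by (simp add: scale_def)

lemma lifting_single: "lifting ok r m m' \<Longrightarrow> m = {#(1, M)#} \<Longrightarrow> (ok M \<and> m' = m) \<or> r M m'"
proof (induct arbitrary: M rule: lifting.induct)
  case (lift_sum xs)
  from lift_sum(2) have "length xs = 1"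
    by (metis One_nat_def length_map size_mset size_single)
  then obtain p M0 m0 where xs: "xs = [(p, M0, m0)]"
    by (metis (no_types, lifting) One_nat_def length_0_conv length_Suc_conv prod_cases3)
  with lift_sum(2) have "p = 1" "M0 = M" by auto
  with lift_sum(1) xs have "(ok M \<and> m0 = {#(1, M)#}) \<or> r M m0" by auto
  then show ?case using xs \<open>p = 1\<close> \<open>M0 = M\<close> by auto
qed auto

lemma lift_ext_eq:
  assumes "lifting ok r m m'"
    and "\<And>M m''. lifting ok r {#(1, M)#} m'' \<Longrightarrow> ext f m'' N = g M N"
  shows "ext f m' N = ext g m N"
  using assms(1)
proof (cases rule: lifting.cases)
  case (lift_refl M)
  then show ?thesis using assms(2)[of M "{#(1, M)#}"] assms(1) by simp
next
  case (lift_step M)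
  then show ?thesis using assms(2)[of M m'] assms(1) by simp
next
  case (lift_sum xs)
  have "ext f m' N = sum_list (map (\<lambda>(p, M, m). p * ext f m N) xs)"
    using lift_sum by (simp add: ext_sum_list case_prod_unfold)
  also have "\<dots> = sum_list (map (\<lambda>(p, M, m). p * g M N) xs)"
    using lift_sum(3) assms(2) by (intro arg_cong[where f = sum_list] map_cong) auto
  also have "\<dots> = ext g m N" by (simp only: lift_sum(1) ext_mset_map)
  finally show ?thesis .
qed

definition pos :: "mdist \<Rightarrow> bool" where "pos m \<longleftrightarrow> (\<forall>x\<in>#m. 0 < fst x)"
definition wt :: "mdist \<Rightarrow> real" where "wt m = sum_mset (image_mset fst m)"

lemma sum_list_mono_pairs:
  fixes f g :: "'a \<Rightarrow> real"
  shows "(\<And>x. x \<in> set xs \<Longrightarrow> f x \<le> g x) \<Longrightarrow> sum_list (map f xs) \<le> sum_list (map g xs)"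
  by (induct xs) (simp_all add: add_mono)

lemma lift_ext_le:
  assumes "lifting ok r m m'" and "pos m"
    and "\<And>M m''. lifting ok r {#(1, M)#} m'' \<Longrightarrow> ext f m'' N \<le> g M N"
  shows "ext f m' N \<le> ext g m N"
  using assms(1)
proof (cases rule: lifting.cases)
  case (lift_refl M)
  then show ?thesis using assms(3)[of M "{#(1, M)#}"] assms(1) by simp
next
  case (lift_step M)
  then show ?thesis using assms(3)[of M m'] assms(1) by simp
next
  case (lift_sum xs)
  have "ext f m' N = sum_list (map (\<lambda>(p, M, m). p * ext f m N) xs)"
    using lift_sum by (simp add: ext_sum_list case_prod_unfold)
  also have "\<dots> \<le> sum_list (map (\<lambda>(p, M, m). p * g M N) xs)"
  proof (rule sum_list_mono_pairs)
    fix x assume x: "x \<in> set xs"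
    obtain p M m0 where x': "x = (p, M, m0)" by (cases x) auto
    have "(p, M) \<in># m" using lift_sum(1) x x' by force
    then have "0 < p" using assms(2) unfolding pos_def by force
    moreover have "ext f m0 N \<le> g M N" using lift_sum(3) x x' assms(3) by auto
    ultimately show "(\<lambda>(p, M, m). p * ext f m N) x \<le> (\<lambda>(p, M, m). p * g M N) x"
      using x' by (simp add: mult_left_mono)
  qed
  also have "\<dots> = ext g m N" by (simp only: lift_sum(1) ext_mset_map)
  finally show ?thesis .
qed



lemma ered_red: "ered M m \<Longrightarrow> red M m"
  by (cases rule: ered.cases) (auto simp: red_def sred_def dest: beta_w_beta ured_beta)

lemma normal_no_ered: "normal M \<Longrightarrow> ered M m \<Longrightarrow> False"
  using ered_red unfolding normal_def by blast

lemma ered_ex: "\<not> normal M \<Longrightarrow> \<exists>m. ered M m"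
proof (cases "snormal M")
  case False
  then obtain m where "sred M m" unfolding snormal_def by blast
  then show ?thesis using False by (blast intro: ered.ered_s)
next
  case True
  assume "\<not> normal M"
  then obtain m where "red M m" unfolding normal_def by blast
  then have "(\<exists>N. beta M N \<and> m = {#(1, N)#}) \<or> oplus_step M m" unfolding red_def .
  then show ?thesis
  proof
    assume "\<exists>N. beta M N \<and> m = {#(1, N)#}"
    then obtain N where "beta M N" by blast
    then obtain N' where "ured M N'" using beta_ex_ured by blast
    then show ?thesis using True by (blast intro: ered.ered_u)
  next
    assume "oplus_step M m"
    then have "sred M m" unfolding sred_def by blast
    then show ?thesis using True unfolding snormal_def by blast
  qed
qed

lemma lift_list:
  assumes "\<And>M. lifting ok r {#(1, M)#} (F M)"
  shows "lifting ok r (mset xs) (sum_list (map (\<lambda>(p, M). scale p (F M)) xs))"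
proof -
  have L: "lifting ok r (mset (map (\<lambda>(p, M, m). (p, M)) (map (\<lambda>(p, M). (p, M, F M)) xs)))
     (sum_list (map (\<lambda>(p, M, m). scale p m) (map (\<lambda>(p, M). (p, M, F M)) xs)))"
    by (rule lift_sum) (auto simp: assms)
  have e1: "map (\<lambda>(p, M, m). (p, M)) (map (\<lambda>(p, M). (p, M, F M)) xs) = xs"
    by (induct xs) auto
  have e2: "map (\<lambda>(p, M, m). scale p m) (map (\<lambda>(p, M). (p, M, F M)) xs) = map (\<lambda>(p, M). scale p (F M)) xs"
    by (induct xs) auto
  show ?thesis using L unfolding e1 e2 .
qed

lemma Elift_single_ex: "\<exists>m. Elift {#(1, M)#} m"
proof (cases "normal M")
  case True
  then show ?thesis unfolding Elift_def by (blast intro: lift_refl)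
next
  case False
  then show ?thesis using ered_ex unfolding Elift_def by (blast intro: lift_step)
qed

definition succ :: "trm \<Rightarrow> mdist" where "succ M = (SOME m. Elift {#(1, M)#} m)"

lemma succ_Elift: "Elift {#(1, M)#} (succ M)"
  unfolding succ_def using Elift_single_ex by (rule someI_ex)

lemma Elift_ex: "\<exists>m'. Elift m m'"
proof -
  obtain xs where "mset xs = m" using ex_mset by blast
  then show ?thesis using lift_list[of normal ered succ xs] succ_Elift unfolding Elift_def by blast
qed

lemma sum_scale_single: "sum_list (map (\<lambda>(p, M). scale p {#(1, M)#}) xs) = mset xs"
  by (induct xs) auto

lemma Rlift_refl: "Rlift m m"
proof -
  obtain xs where xs: "mset xs = m" using ex_mset by blast
  have "lifting (\<lambda>_. True) red (mset xs) (sum_list (map (\<lambda>(p, M). scale p {#(1, M)#}) xs))"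
    by (rule lift_list) (auto intro: lift_refl)
  then show ?thesis using xs sum_scale_single unfolding Rlift_def by metis
qed

lemma Elift_Rlift: "Elift m m' \<Longrightarrow> Rlift m m'"
  unfolding Elift_def Rlift_def
proof (induct rule: lifting.induct)
  case (lift_refl M)
  then show ?case by (auto intro: lifting.lift_refl)
next
  case (lift_step M m)
  then show ?case by (auto intro: lifting.lift_step ered_red)
next
  case (lift_sum xs)
  show ?case by (rule lifting.lift_sum) (use lift_sum in auto)
qed

lemma succ_normal: "normal M \<Longrightarrow> succ M = {#(1, M)#}"
  using lifting_single[OF succ_Elift[unfolded Elift_def] refl] normal_no_ered by blast

lemma succ_ered: "\<not> normal M \<Longrightarrow> ered M (succ M)"
  using lifting_single[OF succ_Elift[unfolded Elift_def] refl] by blast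

lemma red_pos_wt: "red M m \<Longrightarrow> pos m \<and> wt m = 1"
  unfolding red_def oplus_step_def pos_def wt_def by auto

lemma wt_ext: "wt m = ext (\<lambda>_ _. 1) m N"
  unfolding wt_def ext_def by (induct m) auto

lemma lifting_single_pos:
  assumes "lifting ok r {#(1, M)#} m" "\<And>M m. r M m \<Longrightarrow> red M m"
  shows "pos m \<and> wt m = 1"
proof -
  have "(ok M \<and> m = {#(1, M)#}) \<or> r M m" using lifting_single[OF assms(1) refl] by simp
  then show ?thesis
  proof
    assume "ok M \<and> m = {#(1, M)#}" then show ?thesis by (simp add: pos_def wt_def)
  next
    assume "r M m" then show ?thesis using red_pos_wt assms(2) by blast
  qed
qed

lemma in_sum_list: "x \<in># sum_list (map h xs) \<Longrightarrow> \<exists>y\<in>set xs. x \<in># h y"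
  by (induct xs) auto

lemma lifting_pos:
  assumes "lifting ok r m m'" "\<And>M m. r M m \<Longrightarrow> red M m" "pos m"
  shows "pos m' \<and> wt m' = wt m"
proof
  have "ext (\<lambda>_ _. 1) m' undefined = ext (\<lambda>_ _. 1) m undefined"
    using assms(1) by (rule lift_ext_eq) (use lifting_single_pos[OF _ assms(2)] wt_ext in auto)
  then show "wt m' = wt m" using wt_ext by metis
next
  show "pos m'"
    using assms(1)
  proof (cases rule: lifting.cases)
    case (lift_refl M)
    then show ?thesis using assms(3) by simp
  next
    case (lift_step M)
    then show ?thesis using assms(2) red_pos_wt by blast
  next
    case (lift_sum xs)
    show ?thesis unfolding pos_def
    proof
      fix x assume "x \<in># m'"
      then have "x \<in># sum_list (map (\<lambda>(p, M, m). scale p m) xs)" using lift_sum(2) by simp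
      from in_sum_list[OF this] obtain y where y: "y \<in> set xs" "x \<in># (\<lambda>(p, M, m). scale p m) y"
        by blast
      obtain p M m0 where y': "y = (p, M, m0)" by (cases y) auto
      have "(p, M) \<in> set (map (\<lambda>(p, M, m). (p, M)) xs)" using y(1) y' by force
      then have "(p, M) \<in># m" using lift_sum(1) by simp
      then have "0 < p" using assms(3) unfolding pos_def by fastforce
      have "lifting ok r {#(1, M)#} m0" using lift_sum(3) y(1) unfolding y' by auto
      then have "pos m0" using lifting_single_pos[OF _ assms(2)] by blast
      moreover obtain z where "z \<in># m0" "x = (p * fst z, snd z)"
        using y(2) unfolding y' scale_def by (auto simp: case_prod_beta)
      ultimately show "0 < fst x" using \<open>0 < p\<close> unfolding pos_def by simp
    qed
  qed
qed

lemma ext_bounds: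
  assumes "pos m" "\<And>M. 0 \<le> f M N \<and> f M N \<le> 1"
  shows "0 \<le> ext f m N \<and> ext f m N \<le> wt m"
  using assms(1)
proof (induct m)
  case empty
  then show ?case by (simp add: wt_def)
next
  case (add x m)
  obtain p M where x: "x = (p, M)" by (cases x) auto
  have "pos m" "0 < p" using add(2) x unfolding pos_def by auto
  then have ih: "0 \<le> ext f m N \<and> ext f m N \<le> wt m" using add(1) by blast
  have "0 \<le> p * f M N" "p * f M N \<le> p" using assms(2)[of M] \<open>0 < p\<close>
    by (auto simp: mult_left_le)
  then show ?case using ih x by (simp add: wt_def)
qed

lemma ext_mono:
  assumes "pos m" "\<And>M. f M N \<le> g M N"
  shows "ext f m N \<le> ext g m N"
  using assms(1)
proof (induct m)
  case empty
  then show ?case by simp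
next
  case (add x m)
  obtain p M where x: "x = (p, M)" by (cases x) auto
  have "pos m" "0 < p" using add(2) x unfolding pos_def by auto
  then show ?case using add(1) x assms(2)[of M] by (simp add: add_mono mult_left_mono)
qed

lemma Elift_red: "ered M m \<Longrightarrow> red M m" by (rule ered_red)

lemma succ_pos: "pos (succ M) \<and> wt (succ M) = 1"
  using lifting_single_pos[OF succ_Elift[unfolded Elift_def] ered_red] .



lemma notnormal_beta_w: "beta_w X Y \<Longrightarrow> \<not> normal X"
  using normal_iff beta_w_beta by blast
lemma notnormal_HC: "HC X \<Longrightarrow> \<not> normal X"
  using normal_iff by blast
lemma notnormal_ured: "ured X Y \<Longrightarrow> \<not> normal X"
  using normal_iff ured_beta by blast
lemma notsnormal_beta_w: "beta_w X Y \<Longrightarrow> \<not> snormal X"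
  using snormal_iff beta_w_wnormal by blast
lemma notsnormal_HC: "HC X \<Longrightarrow> \<not> snormal X"
  using snormal_iff by blast

lemma ered_bw: "beta_w X Y \<Longrightarrow> ered X {#(1, Y)#}"
  by (rule ered.ered_s) (auto simp: sred_def dest: notsnormal_beta_w)

lemma ered_cs: "choice_split X A B \<Longrightarrow> ered X {#(1/2, A), (1/2, B)#}"
proof -
  assume a: "choice_split X A B"
  then have "\<not> snormal X" using notsnormal_HC HC_def by blast
  then show ?thesis using a by (intro ered.ered_s) (auto simp: sred_def oplus_step_def)
qed

lemma Elift_of_ered: "ered X m \<Longrightarrow> Elift {#(1, X)#} m"
  unfolding Elift_def by (rule lift_step)

lemma Elift_pair:
  assumes "Elift {#(1, A)#} mA" "Elift {#(1, B)#} mB"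
  shows "Elift {#(p, A), (q, B)#} (scale p mA + scale q mB)"
proof -
  have "lifting normal ered (mset (map (\<lambda>(p, M, m). (p, M)) [(p, A, mA), (q, B, mB)]))
      (sum_list (map (\<lambda>(p, M, m). scale p m) [(p, A, mA), (q, B, mB)]))"
    by (rule lift_sum) (use assms in \<open>auto simp: Elift_def\<close>)
  then show ?thesis unfolding Elift_def by (simp add: add_mset_commute)
qed

lemma SD:
  assumes "ered M m1" "ered M m2" "m1 \<noteq> m2"
  shows "(\<forall>x\<in>#m1. \<not> normal (snd x)) \<and> (\<forall>x\<in>#m2. \<not> normal (snd x)) \<and> (\<exists>r. Elift m1 r \<and> Elift m2 r)"
  using assms(1)
proof (cases rule: ered.cases)
  case ered_s
  note s1 = ered_s
  from assms(2) show ?thesis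
  proof (cases rule: ered.cases)
    case ered_u
    then show ?thesis using s1 by blast
  next
    case ered_s
    have c1: "(\<exists>N. beta_w M N \<and> m1 = {#(1, N)#}) \<or> (\<exists>A B. choice_split M A B \<and> m1 = {#(1/2, A), (1/2, B)#})"
      using s1 unfolding sred_def oplus_step_def by blast
    have c2: "(\<exists>N. beta_w M N \<and> m2 = {#(1, N)#}) \<or> (\<exists>A B. choice_split M A B \<and> m2 = {#(1/2, A), (1/2, B)#})"
      using ered_s unfolding sred_def oplus_step_def by blast
    show ?thesis
    proof (cases "\<exists>N. beta_w M N \<and> m1 = {#(1, N)#}")
      case True
      then obtain N1 where N1: "beta_w M N1" "m1 = {#(1, N1)#}" by blast
      show ?thesis
      proof (cases "\<exists>N. beta_w M N \<and> m2 = {#(1, N)#}")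
        case True
        then obtain N2 where N2: "beta_w M N2" "m2 = {#(1, N2)#}" by blast
        then have "N1 \<noteq> N2" using N1 assms(3) by auto
        then obtain P where "beta_w N1 P" "beta_w N2 P" using beta_w_diamond N1 N2 by blast
        then show ?thesis using N1 N2
          by (auto dest: notnormal_beta_w intro!: Elift_of_ered ered_bw)
      next
        case False
        then obtain A B where AB: "choice_split M A B" "m2 = {#(1/2, A), (1/2, B)#}" using c2 by blast
        obtain A' B' where AB': "choice_split N1 A' B'" "beta_w A A'" "beta_w B B'"
          using BO N1 AB by blast
        have "Elift m1 {#(1/2, A'), (1/2, B')#}" unfolding N1(2) by (intro Elift_of_ered ered_cs AB')
        moreover have "Elift m2 (scale (1/2) {#(1, A')#} + scale (1/2) {#(1, B')#})"
          unfolding AB(2) by (intro Elift_pair Elift_of_ered ered_bw AB')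
        moreover have "\<not> normal N1" "\<not> normal A" "\<not> normal B"
          using AB' notnormal_HC notnormal_beta_w HC_def by blast+
        moreover have "scale (1/2) {#(1, A')#} + scale (1/2) {#(1, B')#} = {#(1/2, A'), (1/2, B')#}"
          by (simp add: add_mset_commute)
        ultimately show ?thesis using N1 AB by (metis insert_iff set_mset_add_mset_insert set_mset_empty snd_conv empty_iff)
      qed
    next
      case False
      then obtain A1 B1 where AB1: "choice_split M A1 B1" "m1 = {#(1/2, A1), (1/2, B1)#}" using c1 by blast
      show ?thesis
      proof (cases "\<exists>N. beta_w M N \<and> m2 = {#(1, N)#}")
        case True
        then obtain N2 where N2: "beta_w M N2" "m2 = {#(1, N2)#}" by blast
        obtain A' B' where AB': "choice_split N2 A' B'" "beta_w A1 A'" "beta_w B1 B'"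
          using BO N2 AB1 by blast
        have "Elift m2 {#(1/2, A'), (1/2, B')#}" unfolding N2(2) by (intro Elift_of_ered ered_cs AB')
        moreover have "Elift m1 (scale (1/2) {#(1, A')#} + scale (1/2) {#(1, B')#})"
          unfolding AB1(2) by (intro Elift_pair Elift_of_ered ered_bw AB')
        moreover have "\<not> normal N2" "\<not> normal A1" "\<not> normal B1"
          using AB' notnormal_HC notnormal_beta_w HC_def by blast+
        moreover have "scale (1/2) {#(1, A')#} + scale (1/2) {#(1, B')#} = {#(1/2, A'), (1/2, B')#}"
          by (simp add: add_mset_commute)
        ultimately show ?thesis using N2 AB1 by (metis insert_iff set_mset_add_mset_insert set_mset_empty snd_conv empty_iff)
      next
        case False
        then obtain A2 B2 where AB2: "choice_split M A2 B2" "m2 = {#(1/2, A2), (1/2, B2)#}" using c2 by blast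
        have "\<not> (A1 = A2 \<and> B1 = B2)" using AB1 AB2 assms(3) by auto
        then obtain X Y Z W where XYZW: "choice_split A1 X Y" "choice_split B1 Z W"
          "choice_split A2 X Z" "choice_split B2 Y W"
          using OO AB1(1) AB2(1) by blast
        have "Elift m1 (scale (1/2) {#(1/2, X), (1/2, Y)#} + scale (1/2) {#(1/2, Z), (1/2, W)#})"
          unfolding AB1(2) by (intro Elift_pair Elift_of_ered ered_cs XYZW)
        moreover have "Elift m2 (scale (1/2) {#(1/2, X), (1/2, Z)#} + scale (1/2) {#(1/2, Y), (1/2, W)#})"
          unfolding AB2(2) by (intro Elift_pair Elift_of_ered ered_cs XYZW)
        moreover have "scale (1/2) {#(1/2, X), (1/2, Z)#} + scale (1/2) {#(1/2, Y), (1/2, W)#}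
          = scale (1/2) {#(1/2, X), (1/2, Y)#} + scale (1/2) {#(1/2, Z), (1/2, W)#}"
          by (simp add: scale_def add_mset_commute)
        moreover have "\<not> normal A1" "\<not> normal B1" "\<not> normal A2" "\<not> normal B2"
          using XYZW notnormal_HC HC_def by blast+
        ultimately show ?thesis using AB1 AB2 by auto
      qed
    qed
  qed
next
  case (ered_u M1)
  note u1 = ered_u
  from assms(2) show ?thesis
  proof (cases rule: ered.cases)
    case ered_s
    then show ?thesis using u1 by blast
  next
    case (ered_u M2)
    then have "M1 \<noteq> M2" using u1 assms(3) by auto
    then obtain P where P: "ured M1 P" "ured M2 P" using ured_diamond u1 ered_u by blast
    have "snormal M1" "snormal M2" using u1 ered_u snormal_beta ured_beta by blast+
    then have "Elift {#(1, M1)#} {#(1, P)#}" "Elift {#(1, M2)#} {#(1, P)#}"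
      using P by (auto intro!: Elift_of_ered ered.ered_u)
    moreover have "\<not> normal M1" "\<not> normal M2" using P notnormal_ured by blast+
    ultimately show ?thesis using u1 ered_u by auto
  qed
qed



fun Phi :: "nat \<Rightarrow> trm \<Rightarrow> trm \<Rightarrow> real" where
  "Phi 0 M N = (if N = M \<and> normal M then 1 else 0)"
| "Phi (Suc k) M N = ext (Phi k) (succ M) N"

lemma ext_zero: "(\<And>x. x \<in># m \<Longrightarrow> f (snd x) N = 0) \<Longrightarrow> ext f m N = 0"
proof (induct m)
  case (add x m)
  obtain p M where x: "x = (p, M)" by (cases x) auto
  have "f M N = 0" using add.prems[of x] x by simp
  moreover have "ext f m N = 0" using add by simp
  ultimately show ?case using x by simp
qed simp

lemma Elift_singleE: "Elift {#(1, M)#} m \<Longrightarrow> (normal M \<and> m = {#(1, M)#}) \<or> (\<not> normal M \<and> ered M m)"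
  using lifting_single[of normal ered "{#(1, M)#}" m M] normal_no_ered unfolding Elift_def by blast

lemma two_succ: "\<forall>M m1 m2 N. Elift {#(1, M)#} m1 \<longrightarrow> Elift {#(1, M)#} m2 \<longrightarrow> ext (Phi n) m1 N = ext (Phi n) m2 N"
proof (induct n)
  case 0
  show ?case
  proof (intro allI impI)
    fix M m1 m2 N
    assume a: "Elift {#(1, M)#} m1" "Elift {#(1, M)#} m2"
    show "ext (Phi 0) m1 N = ext (Phi 0) m2 N"
    proof (cases "normal M")
      case True
      have "m1 = {#(1, M)#}" using Elift_singleE[OF a(1)] True by blast
      moreover have "m2 = {#(1, M)#}" using Elift_singleE[OF a(2)] True by blast
      ultimately show ?thesis by simp
    next
      case False
      have e1: "ered M m1" using Elift_singleE[OF a(1)] False by blast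
      have e2: "ered M m2" using Elift_singleE[OF a(2)] False by blast
      note e = e1 e2
      show ?thesis
      proof (cases "m1 = m2")
        case False
        from SD[OF e False] have n1: "\<forall>x\<in>#m1. \<not> normal (snd x)" and n2: "\<forall>x\<in>#m2. \<not> normal (snd x)"
          by blast+
        have "ext (Phi 0) m1 N = 0" by (rule ext_zero) (use n1 in auto)
        moreover have "ext (Phi 0) m2 N = 0" by (rule ext_zero) (use n2 in auto)
        ultimately show ?thesis by simp
      qed simp
    qed
  qed
next
  case (Suc k)
  have K: "ext (Phi k) m'' N = Phi (Suc k) M N" if "Elift {#(1, M)#} m''" for M m'' N
  proof -
    have "ext (Phi k) m'' N = ext (Phi k) (succ M) N" using Suc[rule_format, OF that succ_Elift] .
    then show ?thesis by simp
  qed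
  show ?case
  proof (intro allI impI)
    fix M m1 m2 N
    assume a: "Elift {#(1, M)#} m1" "Elift {#(1, M)#} m2"
    show "ext (Phi (Suc k)) m1 N = ext (Phi (Suc k)) m2 N"
    proof (cases "normal M")
      case True
      have "m1 = {#(1, M)#}" using Elift_singleE[OF a(1)] True by blast
      moreover have "m2 = {#(1, M)#}" using Elift_singleE[OF a(2)] True by blast
      ultimately show ?thesis by simp
    next
      case False
      have e1: "ered M m1" using Elift_singleE[OF a(1)] False by blast
      have e2: "ered M m2" using Elift_singleE[OF a(2)] False by blast
      note e = e1 e2
      show ?thesis
      proof (cases "m1 = m2")
        case False
        from SD[OF e False] obtain r where r: "Elift m1 r" "Elift m2 r" by blast
        have l1: "lifting normal ered m1 r" "lifting normal ered m2 r" using r by (simp_all add: Elift_def)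
        have "ext (Phi k) r N = ext (Phi (Suc k)) m1 N"
          using l1(1) by (rule lift_ext_eq) (use K in \<open>simp add: Elift_def del: Phi.simps\<close>)
        moreover have "ext (Phi k) r N = ext (Phi (Suc k)) m2 N"
          using l1(2) by (rule lift_ext_eq) (use K in \<open>simp add: Elift_def del: Phi.simps\<close>)
        ultimately show ?thesis by simp
      qed simp
    qed
  qed
qed

lemma K: "Elift {#(1, M)#} m \<Longrightarrow> ext (Phi k) m N = Phi (Suc k) M N"
proof -
  assume a: "Elift {#(1, M)#} m"
  have "ext (Phi k) m N = ext (Phi k) (succ M) N" using two_succ[of k, rule_format, OF a succ_Elift] .
  then show ?thesis by simp
qed

lemma K_lift: assumes "Elift m m'" shows "ext (Phi k) m' N = ext (Phi (Suc k)) m N"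
proof -
  have "lifting normal ered m m'" using assms by (simp add: Elift_def)
  then show ?thesis by (rule lift_ext_eq) (use K in \<open>auto simp: Elift_def simp del: Phi.simps\<close>)
qed

lemma obs_ext: "obs m N = ext (Phi 0) m N"
proof (induct m)
  case empty
  then show ?case by (simp add: obs_def)
next
  case (add x m)
  obtain p M where "x = (p, M)" by (cases x) auto
  then show ?case using add by (auto simp: obs_def)
qed

lemma Elift_chain_obs:
  assumes "\<And>i. Elift (t i) (t (Suc i))"
  shows "obs (t n) N = ext (Phi n) (t 0) N"
  using assms
proof (induct n arbitrary: t)
  case 0
  then show ?case by (simp add: obs_ext del: Phi.simps)
next
  case (Suc n)
  have "obs (t (Suc n)) N = ext (Phi n) (t (Suc 0)) N"
    using Suc(1)[of "\<lambda>i. t (Suc i)"] Suc(2) by simp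
  also have "\<dots> = ext (Phi (Suc n)) (t 0) N" using K_lift Suc(2) by blast
  finally show ?case .
qed

lemma Phi_bounds: "0 \<le> Phi k M N \<and> Phi k M N \<le> 1"
proof (induct k arbitrary: M)
  case (Suc k)
  then show ?case using ext_bounds[of "succ M" "Phi k" N] succ_pos by simp
qed simp

lemma Phi_mono: "Phi k M N \<le> Phi (Suc k) M N"
proof (induct k arbitrary: M)
  case 0
  show ?case
  proof (cases "normal M")
    case True
    then show ?thesis using succ_normal by simp
  next
    case False
    then show ?thesis using ext_bounds[of "succ M" "Phi 0" N] succ_pos Phi_bounds by simp
  qed
next
  case (Suc k)
  then show ?case using ext_mono[of "succ M" "Phi k" N "Phi (Suc k)"] succ_pos by simp
qed

lemma Phi_incseq: "incseq (\<lambda>k. Phi k M N)"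
  using Phi_mono by (simp add: incseq_SucI)

definition Psi :: "trm \<Rightarrow> trm \<Rightarrow> real" where "Psi M N = (SUP k. Phi k M N)"

lemma Phi_bdd: "bdd_above (range (\<lambda>k. Phi k M N))"
  by (rule bdd_aboveI[where M=1]) (use Phi_bounds in auto)

lemma Phi_lim: "(\<lambda>k. Phi k M N) \<longlonglongrightarrow> Psi M N"
  unfolding Psi_def using LIMSEQ_incseq_SUP[OF Phi_bdd Phi_incseq] .

lemma Phi_le_Psi: "Phi k M N \<le> Psi M N"
  unfolding Psi_def by (rule cSUP_upper) (simp_all add: Phi_bdd)

lemma Psi_bounds: "0 \<le> Psi M N \<and> Psi M N \<le> 1"
proof
  show "0 \<le> Psi M N" using Phi_le_Psi[of 0 M N] Phi_bounds[of 0 M N] by simp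
  show "Psi M N \<le> 1" unfolding Psi_def using Phi_bounds by (intro cSUP_least) auto
qed

lemma ext_lim: "(\<lambda>k. ext (Phi k) m N) \<longlonglongrightarrow> ext Psi m N"
proof (induct m)
  case empty
  then show ?case by simp
next
  case (add x m)
  obtain p M where x: "x = (p, M)" by (cases x) auto
  have "(\<lambda>k. p * Phi k M N) \<longlonglongrightarrow> p * Psi M N" using Phi_lim by (intro tendsto_mult_left)
  then show ?case using add x by (simp add: tendsto_add)
qed

lemma ext_SUP:
  assumes "pos m"
  shows "(SUP k. ext (Phi k) m N) = ext Psi m N"
proof -
  have inc: "incseq (\<lambda>k. ext (Phi k) m N)"
    using ext_mono[OF assms] Phi_mono by (simp add: incseq_SucI)
  have bdd: "bdd_above (range (\<lambda>k. ext (Phi k) m N))"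
    by (rule bdd_aboveI[where M="wt m"]) (use ext_bounds[OF assms] Phi_bounds in auto)
  show ?thesis using LIMSEQ_unique[OF LIMSEQ_incseq_SUP[OF bdd inc] ext_lim] .
qed

lemma Psi_step: "Elift {#(1, M)#} m \<Longrightarrow> Psi M N = ext Psi m N"
proof -
  assume a: "Elift {#(1, M)#} m"
  have "(\<lambda>k. Phi (Suc k) M N) \<longlonglongrightarrow> Psi M N" using Phi_lim by (rule LIMSEQ_Suc)
  moreover have "(\<lambda>k. Phi (Suc k) M N) = (\<lambda>k. ext (Phi k) m N)" using K[OF a] by simp
  ultimately show ?thesis using ext_lim LIMSEQ_unique by metis
qed

lemma Psi_Elift: assumes "Elift m m'" shows "ext Psi m' N = ext Psi m N"
proof -
  have "lifting normal ered m m'" using assms by (simp add: Elift_def)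
  then show ?thesis by (rule lift_ext_eq) (use Psi_step in \<open>auto simp: Elift_def\<close>)
qed

lemma Psi_ered: "ered M m \<Longrightarrow> Psi M N = ext Psi m N"
  using Psi_step Elift_of_ered by blast

lemma Psi_bw: "beta_w M M' \<Longrightarrow> Psi M N = Psi M' N"
  using Psi_ered[OF ered_bw] by simp

lemma Psi_wstar: "wstar M M' \<Longrightarrow> Psi M N = Psi M' N"
  by (induct rule: rtranclp_induct) (auto simp: Psi_bw)



lemma Conv: "ustar X Y \<Longrightarrow> \<not> HC Y \<Longrightarrow> Psi X N = Psi Y N"
proof (induct rule: converse_rtranclp_induct)
  case base
  then show ?case by simp
next
  case (step X X1)
  have "ustar X Y" using step(1,2) by (rule converse_rtranclp_into_rtranclp)
  then have "\<not> HC X" using HC_betastar ustar_beta step(4) by blast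
  have "ered X {#(1, X1)#}"
  proof (cases "snormal X")
    case True
    then show ?thesis using step(1) by (rule ered.ered_u)
  next
    case False
    then have "\<not> wnormal X" using \<open>\<not> HC X\<close> snormal_iff by blast
    then have "beta_w X X1" using ured_not_wnormal step(1) by blast
    then show ?thesis by (rule ered_bw)
  qed
  then have "Psi X N = Psi X1 N" using Psi_ered by simp
  then show ?case using step(3,4) by simp
qed

lemma Phi_normal: "normal M \<Longrightarrow> Phi k M N = Phi 0 M N"
proof (induct k)
  case (Suc k)
  then show ?case using succ_normal[OF Suc(2)] by (simp del: Phi.simps(1))
qed simp

lemma normal_case: "par M M' \<Longrightarrow> normal M' \<Longrightarrow> Phi 0 M' N \<le> Psi M N"
proof -
  assume a: "par M M'" "normal M'"
  then have "bnormal M'" "\<not> HC M'" using normal_iff bnormal_def by auto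
  then have "ustar M M'" using NL a(1) by blast
  then have "Psi M N = Psi M' N" using Conv \<open>\<not> HC M'\<close> by blast
  then show ?thesis using Phi_le_Psi[of 0 M' N] by (simp del: Phi.simps)
qed

lemma C: "par M M' \<Longrightarrow> Phi k M' N \<le> Psi M N"
proof (induct k arbitrary: M M')
  case 0
  show ?case
  proof (cases "normal M'")
    case True
    then show ?thesis using normal_case 0 by blast
  next
    case False
    then show ?thesis using Psi_bounds[of M N] by simp
  qed
next
  case (Suc j)
  note IH = Suc(1)
  show ?case
  proof (cases "normal M'")
    case True
    then show ?thesis using normal_case Suc(2) Phi_normal by metis
  next
    case False
    define m' where "m' = succ M'"
    have e: "ered M' m'" using succ_ered False m'_def by simp
    have P: "Phi (Suc j) M' N = ext (Phi j) m' N" using m'_def by simp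
    obtain M0 where M0: "wstar M M0" "ipar M0 M'" using TF Suc(2) by blast
    have PsiM: "Psi M N = Psi M0 N" using Psi_wstar M0(1) by blast
    from e show ?thesis
    proof (cases rule: ered.cases)
      case ered_s
      then have "(\<exists>N. beta_w M' N \<and> m' = {#(1, N)#}) \<or> (\<exists>A B. choice_split M' A B \<and> m' = {#(1/2, A), (1/2, B)#})"
        unfolding sred_def oplus_step_def by blast
      then show ?thesis
      proof
        assume "\<exists>N. beta_w M' N \<and> m' = {#(1, N)#}"
        then obtain M'' where M'': "beta_w M' M''" "m' = {#(1, M'')#}" by blast
        obtain N0 where N0: "beta_w M0 N0" "par N0 M''" using WC M''(1) M0(2) by blast
        have "Psi M0 N = Psi N0 N" using Psi_bw N0(1) by blast
        moreover have "Phi j M'' N \<le> Psi N0 N" using IH N0(2) by blast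
        ultimately show ?thesis using P M''(2) PsiM by simp
      next
        assume "\<exists>A B. choice_split M' A B \<and> m' = {#(1/2, A), (1/2, B)#}"
        then obtain A' B' where AB': "choice_split M' A' B'" "m' = {#(1/2, A'), (1/2, B')#}" by blast
        obtain A B where AB: "choice_split M0 A B" "par A A'" "par B B'" using ipar_split AB'(1) M0(2) by blast
        have "Psi M0 N = ext Psi {#(1/2, A), (1/2, B)#} N" using Psi_ered ered_cs AB(1) by blast
        moreover have "Phi j A' N \<le> Psi A N" "Phi j B' N \<le> Psi B N" using IH AB by blast+
        ultimately show ?thesis using P AB'(2) PsiM by simp
      qed
    next
      case (ered_u M'')
      obtain N0 where N0: "ustar M N0" "par N0 M''" using U ered_u(3) Suc(2) by blast
      have "snormal M''" using snormal_beta ured_beta ered_u by blast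
      then have "\<not> HC M''" using snormal_iff by blast
      then have "\<not> HC N0" using HC_par N0(2) by blast
      then have "Psi M N = Psi N0 N" using Conv N0(1) by blast
      moreover have "Phi j M'' N \<le> Psi N0 N" using IH N0(2) by blast
      ultimately show ?thesis using P ered_u(1) by simp
    qed
  qed
qed

lemma Psi_par: "par M M' \<Longrightarrow> Psi M' N \<le> Psi M N"
  unfolding Psi_def[of M'] by (rule cSUP_least) (auto intro: C)

lemma Rlift_single_le: "Rlift {#(1, M)#} m \<Longrightarrow> ext Psi m N \<le> Psi M N"
proof -
  assume "Rlift {#(1, M)#} m"
  then have "(m = {#(1, M)#}) \<or> red M m" using lifting_single[of "\<lambda>_. True" red "{#(1, M)#}" m M]
    unfolding Rlift_def by blast
  then show ?thesis
  proof
    assume "m = {#(1, M)#}" then show ?thesis by simp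
  next
    assume "red M m"
    then have "(\<exists>N. beta M N \<and> m = {#(1, N)#}) \<or> (\<exists>A B. choice_split M A B \<and> m = {#(1/2, A), (1/2, B)#})"
      unfolding red_def oplus_step_def by blast
    then show ?thesis
    proof
      assume "\<exists>N. beta M N \<and> m = {#(1, N)#}"
      then obtain M1 where "beta M M1" "m = {#(1, M1)#}" by blast
      then show ?thesis using Psi_par beta_par by simp
    next
      assume "\<exists>A B. choice_split M A B \<and> m = {#(1/2, A), (1/2, B)#}"
      then obtain A B where "choice_split M A B" "m = {#(1/2, A), (1/2, B)#}" by blast
      then show ?thesis using Psi_ered ered_cs by (metis order_refl)
    qed
  qed
qed

lemma Rlift_Psi: assumes "Rlift m m'" "pos m" shows "ext Psi m' N \<le> ext Psi m N"
proof -
  have "lifting (\<lambda>_. True) red m m'" using assms(1) by (simp add: Rlift_def)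
  then show ?thesis by (rule lift_ext_le) (use assms(2) Rlift_single_le in \<open>auto simp: Rlift_def\<close>)
qed

lemma Rlift_pos: "Rlift m m' \<Longrightarrow> pos m \<Longrightarrow> pos m'"
  unfolding Rlift_def using lifting_pos by blast



lemma mdist_pos: "is_mdist m \<Longrightarrow> pos m"
  unfolding is_mdist_def pos_def by auto

lemma Elift_pos: "Elift m m' \<Longrightarrow> pos m \<Longrightarrow> pos m'"
  using Rlift_pos Elift_Rlift by blast

lemma max_seq_Elift: "max_seq Elift m s \<Longrightarrow> s 0 = m \<and> (\<forall>n. Elift (s n) (s (Suc n)))"
  unfolding max_seq_def using Elift_ex by blast

lemma max_seq_Rlift: "max_seq Rlift m s \<Longrightarrow> s 0 = m \<and> (\<forall>n. Rlift (s n) (s (Suc n)))"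
  unfolding max_seq_def using Rlift_refl by blast

lemma Elift_chain_sup:
  assumes "pos m" "s 0 = m" "\<And>n. Elift (s n) (s (Suc n))"
  shows "(\<lambda>N. SUP n. obs (s n) N) = (\<lambda>N. ext Psi m N)"
proof
  fix N
  have "obs (s n) N = ext (Phi n) m N" for n using Elift_chain_obs[of s n N] assms(2,3) by simp
  then show "(SUP n. obs (s n) N) = ext Psi m N" using ext_SUP[OF assms(1)] by simp
qed

lemma Elift_seq_ex: "\<exists>s. s 0 = m \<and> (\<forall>n. Elift (s n) (s (Suc n)))"
proof -
  define s where "s = rec_nat m (\<lambda>_ x. SOME y. Elift x y)"
  have "s 0 = m" by (simp add: s_def)
  moreover have "Elift (s n) (s (Suc n))" for n
  proof -
    have "s (Suc n) = (SOME y. Elift (s n) y)" by (simp add: s_def)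
    then show ?thesis using Elift_ex by (metis someI_ex)
  qed
  ultimately show ?thesis by blast
qed

lemma Lim_Elift: "pos m \<Longrightarrow> Lim Elift m = {(\<lambda>N. ext Psi m N)}"
proof -
  assume p: "pos m"
  obtain s where s: "s 0 = m" "\<And>n. Elift (s n) (s (Suc n))" using Elift_seq_ex by blast
  have "max_seq Elift m s" unfolding max_seq_def using s by blast
  then have "(\<lambda>N. ext Psi m N) \<in> Lim Elift m"
    unfolding Lim_def using Elift_chain_sup[OF p s] by auto
  moreover have "r = (\<lambda>N. ext Psi m N)" if rL: "r \<in> Lim Elift m" for r
  proof -
    obtain t where t: "max_seq Elift m t" "r = (\<lambda>N. SUP n. obs (t n) N)" using rL unfolding Lim_def by blast
    then show ?thesis using Elift_chain_sup[OF p] max_seq_Elift by metis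
  qed
  ultimately show ?thesis by blast
qed

lemma Lim_Rlift_in: "pos m \<Longrightarrow> (\<lambda>N. ext Psi m N) \<in> Lim Rlift m"
proof -
  assume p: "pos m"
  obtain s where s: "s 0 = m" "\<And>n. Elift (s n) (s (Suc n))" using Elift_seq_ex by blast
  have "max_seq Rlift m s" unfolding max_seq_def using s Elift_Rlift by blast
  then show ?thesis unfolding Lim_def using Elift_chain_sup[OF p s] by auto
qed

lemma Lim_Rlift_le: "pos m \<Longrightarrow> r \<in> Lim Rlift m \<Longrightarrow> r \<le> (\<lambda>N. ext Psi m N)"
proof -
  assume p: "pos m" and r: "r \<in> Lim Rlift m"
  obtain s where s: "max_seq Rlift m s" "r = (\<lambda>N. SUP n. obs (s n) N)" using r unfolding Lim_def by blast
  have s0: "s 0 = m" and sR: "\<And>n. Rlift (s n) (s (Suc n))" using max_seq_Rlift[OF s(1)] by auto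
  have ps: "pos (s n)" for n
    by (induct n) (use p s0 sR Rlift_pos in auto)
  have le: "ext Psi (s n) N \<le> ext Psi m N" for n N
  proof (induct n)
    case 0 then show ?case using s0 by simp
  next
    case (Suc n) then show ?case using Rlift_Psi[OF sR ps, of n N] by simp
  qed
  have "obs (s n) N \<le> ext Psi m N" for n N
  proof -
    have "obs (s n) N = ext (Phi 0) (s n) N" by (rule obs_ext)
    also have "\<dots> \<le> ext Psi (s n) N" using ext_mono[OF ps] Phi_le_Psi by blast
    finally show ?thesis using le[of n N] by simp
  qed
  then show ?thesis unfolding s(2) le_fun_def by (auto intro: cSUP_least)
qed

lemma greatest_Rlift: "pos m \<Longrightarrow> is_greatest (Lim Rlift m) (\<lambda>N. ext Psi m N)"
  unfolding is_greatest_def using Lim_Rlift_in Lim_Rlift_le by blast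

lemma den_eq: "pos m \<Longrightarrow> den m = (\<lambda>N. ext Psi m N)"
  unfolding den_def
proof (rule the_equality)
  assume "pos m"
  then show "is_greatest (Lim Rlift m) (\<lambda>N. ext Psi m N)" by (rule greatest_Rlift)
  fix r assume "is_greatest (Lim Rlift m) r"
  then show "r = (\<lambda>N. ext Psi m N)"
    using greatest_Rlift[OF \<open>pos m\<close>] unfolding is_greatest_def by (meson order_antisym)
qed

theorem mainTheorem11:
  assumes "is_mdist m"
  shows "(\<exists>r. is_greatest (Lim Rlift m) r)
    \<and> (\<forall>r. obs_rel Elift m r \<longleftrightarrow> r = den m)
    \<and> obs_normalizing Elift Rlift"
proof (intro conjI)
  have p: "pos m" using assms by (rule mdist_pos)
  show "\<exists>r. is_greatest (Lim Rlift m) r" using greatest_Rlift[OF p] by blast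
  show "\<forall>r. obs_rel Elift m r \<longleftrightarrow> r = den m"
    using Lim_Elift[OF p] den_eq[OF p] unfolding obs_rel_def by auto
  show "obs_normalizing Elift Rlift"
    unfolding obs_normalizing_def
  proof (intro conjI allI impI ballI)
    fix m m' assume "Elift m m'" then show "Rlift m m'" by (rule Elift_Rlift)
  next
    fix m q assume "is_mdist m" "obs_rel Rlift m q"
    then have p: "pos m" and "q \<in> Lim Rlift m" using mdist_pos obs_rel_def by auto
    then show "\<exists>p. obs_rel Elift m p \<and> q \<le> p"
      using Lim_Rlift_le Lim_Elift unfolding obs_rel_def by blast
  next
    fix m r assume "is_mdist m" "r \<in> Lim Elift m"
    then show "is_maximal (Lim Elift m) r"
      using Lim_Elift mdist_pos unfolding is_maximal_def by auto
  qed
qed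

end
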